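(* Let $t\ge2$, $n\ge1$, let $\lambda$ be a partition of length at most $tn+1$ and write $n_i=n_i(\lambda,tn+1)$. Then the following are equivalent: (a) there exists $i_0\in\{1,\dots,\lfloor t/2\rfloor\}$ such that $n_0=n$ and, for all $1\le i\le\lfloor t/2\rfloor$, $n_i+n_{t-i}=2n+1+\delta_{i_0,t/2}$ if $i=i_0$ and $n_i+n_{t-i}=2n$ otherwise; (b) the $t$-core of $\lambda$ is a $(1,0,k)$-asymmetric partition for some $1\le k\le\mathrm{rk}(\text{$t$-core of }\lambda)$.
   Context: For a partition $\lambda$ of length at most $\ell$, $\beta_i(\lambda,\ell)=\lambda_i+\ell-i$ and $n_i(\lambda,\ell)$ is the number of $\beta_j(\lambda,\ell)$ congruent to $i$ mod $t$ ($0\le i\le t-1$). The $t$-core is the usual one. Rank $\mathrm{rk}(\mu)=\max\{j:\mu_j\ge j\}$; Frobenius coordinates $(\alpha\mid\beta)$, $\alpha_i=\mu_i-i$, $\beta_i=\mu'_i-i$. For integers $z_1>z_2\ge0$ and $1\le k\le r=\mathrm{rk}(\mu)$, $\mu$ is $(z_1,z_2,k)$-asymmetric if $\mu=(\alpha_1,\dots,\alpha_r\mid\alpha_1+z_1,\dots,\widehat{\alpha_k+z_1},\dots,\alpha_r+z_1,z_2)$ for some strict partition $\alpha$ (hat = omission). *)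

theory Defs
  imports Main
begin

text \<open>Partitions are represented as weakly decreasing lists of positive naturals.
  Parts are indexed from 1; parts beyond the length are 0.\<close>

definition is_partition :: "nat list \<Rightarrow> bool" where
  "is_partition xs \<longleftrightarrow> sorted_wrt (\<ge>) xs \<and> 0 \<notin> set xs"

definition part :: "nat list \<Rightarrow> nat \<Rightarrow> nat" where
  "part lam i = (if 1 \<le> i \<and> i \<le> length lam then lam ! (i - 1) else 0)"

definition beta_num :: "nat list \<Rightarrow> nat \<Rightarrow> nat \<Rightarrow> nat" where
  "beta_num lam l i = part lam i + l - i"

definition ncount :: "nat \<Rightarrow> nat list \<Rightarrow> nat \<Rightarrow> nat \<Rightarrow> nat" where
  "ncount t lam l i = card {j \<in> {1..l}. beta_num lam l j mod t = i}"

text \<open>Young diagram (English convention, cells (row, column), 1-indexed).\<close>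

definition diagram :: "nat list \<Rightarrow> (nat \<times> nat) set" where
  "diagram lam = {(i, j). 1 \<le> i \<and> 1 \<le> j \<and> j \<le> part lam i}"

definition cell_adj :: "nat \<times> nat \<Rightarrow> nat \<times> nat \<Rightarrow> bool" where
  "cell_adj c d \<longleftrightarrow>
     (fst c = fst d \<and> (snd c = Suc (snd d) \<or> snd d = Suc (snd c))) \<or>
     (snd c = snd d \<and> (fst c = Suc (fst d) \<or> fst d = Suc (fst c)))"

definition cells_connected :: "(nat \<times> nat) set \<Rightarrow> bool" where
  "cells_connected D \<longleftrightarrow>
     (\<forall>c\<in>D. \<forall>d\<in>D. (\<lambda>x y. x \<in> D \<and> y \<in> D \<and> cell_adj x y)\<^sup>*\<^sup>* c d)"

definition no_2x2_square :: "(nat \<times> nat) set \<Rightarrow> bool" where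
  "no_2x2_square D \<longleftrightarrow>
     \<not> (\<exists>i j. (i, j) \<in> D \<and> (Suc i, j) \<in> D \<and> (i, Suc j) \<in> D \<and> (Suc i, Suc j) \<in> D)"

definition remove_rim_hook :: "nat \<Rightarrow> nat list \<Rightarrow> nat list \<Rightarrow> bool" where
  "remove_rim_hook t lam mu \<longleftrightarrow>
     is_partition mu \<and> diagram mu \<subseteq> diagram lam \<and>
     card (diagram lam - diagram mu) = t \<and>
     cells_connected (diagram lam - diagram mu) \<and>
     no_2x2_square (diagram lam - diagram mu)"

text \<open>The t-core: the partition obtained by successively removing rim t-hooks
  until no further rim t-hook can be removed (it is well known to be unique).\<close>

definition tcore :: "nat \<Rightarrow> nat list \<Rightarrow> nat list" where
  "tcore t lam = (THE mu. (remove_rim_hook t)\<^sup>*\<^sup>* lam mu \<and> \<not> (\<exists>nu. remove_rim_hook t mu nu))"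

definition conj_part :: "nat list \<Rightarrow> nat \<Rightarrow> nat" where
  "conj_part lam j = card {i. 1 \<le> i \<and> j \<le> part lam i}"

definition rk :: "nat list \<Rightarrow> nat" where
  "rk mu = Max ({0} \<union> {j. 1 \<le> j \<and> j \<le> part mu j})"

definition frob_arms :: "nat list \<Rightarrow> nat list" where
  "frob_arms mu = map (\<lambda>i. part mu i - i) [1..<rk mu + 1]"

definition frob_legs :: "nat list \<Rightarrow> nat list" where
  "frob_legs mu = map (\<lambda>i. conj_part mu i - i) [1..<rk mu + 1]"

text \<open>(z1,z2,k)-asymmetric: mu = (alpha_1..alpha_r | alpha_1+z1, ..., omit alpha_k+z1, ...,
  alpha_r+z1, z2) for a strictly decreasing sequence alpha (of nonnegative integers).\<close>

definition asymmetric :: "nat \<Rightarrow> nat \<Rightarrow> nat \<Rightarrow> nat list \<Rightarrow> bool" where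
  "asymmetric z1 z2 k mu \<longleftrightarrow>
     1 \<le> k \<and> k \<le> rk mu \<and>
     (\<exists>alpha. sorted_wrt (>) alpha \<and> length alpha = rk mu \<and>
        frob_arms mu = alpha \<and>
        frob_legs mu = (let ys = map (\<lambda>a. a + z1) alpha in take (k - 1) ys @ drop k ys) @ [z2])"

end

theory Submission
  imports Defs
begin

lemma part_mono:
  assumes "is_partition lam" "1 \<le> i" "i \<le> j"
  shows "part lam j \<le> part lam i"
proof (cases "j \<le> length lam")
  case True
  have s: "sorted_wrt (\<ge>) lam" using assms(1) unfolding is_partition_def by auto
  show ?thesis
  proof (cases "i = j")
    case False
    then have "i - 1 < j - 1" using assms by auto
    moreover have "j - 1 < length lam" using True assms by auto
    ultimately have "lam ! (j-1) \<le> lam ! (i-1)" using sorted_wrt_nth_less[OF s] by blast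
    then show ?thesis using True assms unfolding part_def by auto
  qed simp
next
  case False
  then show ?thesis unfolding part_def by auto
qed

lemma part_zero: "length lam < j \<Longrightarrow> part lam j = 0"
  unfolding part_def by auto

lemma part_pos:
  assumes "is_partition lam" "1 \<le> i" "i \<le> length lam"
  shows "part lam i \<ge> 1"
proof -
  have "lam ! (i-1) \<in> set lam" using assms by auto
  then have "lam ! (i-1) \<noteq> 0" using assms(1) unfolding is_partition_def by metis
  then show ?thesis using assms unfolding part_def by auto
qed

lemma part_pos_iff:
  assumes "is_partition lam" "1 \<le> i"
  shows "part lam i \<ge> 1 \<longleftrightarrow> i \<le> length lam"
  using part_pos[OF assms] part_zero[of lam i] assms by fastforce

lemma partition_eq:
  assumes "is_partition lam" "is_partition mu" "\<And>i. 1 \<le> i \<Longrightarrow> part lam i = part mu i"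
  shows "lam = mu"
proof -
  have len: "length lam = length mu"
  proof (rule ccontr)
    assume "length lam \<noteq> length mu"
    then consider "length lam < length mu" | "length mu < length lam" by linarith
    then show False
    proof cases
      case 1
      then have "part mu (length mu) \<ge> 1" using part_pos[OF assms(2)] by auto
      moreover have "part lam (length mu) = 0" using part_zero 1 by auto
      ultimately show False using assms(3)[of "length mu"] 1 by auto
    next
      case 2
      then have "part lam (length lam) \<ge> 1" using part_pos[OF assms(1)] by auto
      moreover have "part mu (length lam) = 0" using part_zero 2 by auto
      ultimately show False using assms(3)[of "length lam"] 2 by auto
    qed
  qed
  show ?thesis
  proof (rule nth_equalityI[OF len])
    fix i assume "i < length lam"
    then show "lam ! i = mu ! i" using assms(3)[of "Suc i"] len unfolding part_def by auto
  qed
qed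

lemma diagram_subset_iff:
  "diagram mu \<subseteq> diagram lam \<longleftrightarrow> (\<forall>i\<ge>1. part mu i \<le> part lam i)"
proof
  assume h: "diagram mu \<subseteq> diagram lam"
  show "\<forall>i\<ge>1. part mu i \<le> part lam i"
  proof (intro allI impI)
    fix i :: nat assume i: "1 \<le> i"
    show "part mu i \<le> part lam i"
    proof (cases "part mu i = 0")
      case False
      then have "(i, part mu i) \<in> diagram mu" using i unfolding diagram_def by auto
      then have "(i, part mu i) \<in> diagram lam" using h by auto
      then show ?thesis unfolding diagram_def by auto
    qed simp
  qed
next
  assume "\<forall>i\<ge>1. part mu i \<le> part lam i"
  then show "diagram mu \<subseteq> diagram lam" unfolding diagram_def by fastforce
qed

definition bset :: "nat \<Rightarrow> nat list \<Rightarrow> nat set" where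
  "bset l lam = beta_num lam l ` {1..l}"

lemma beta_strict:
  assumes "is_partition lam" "1 \<le> i" "i < j" "j \<le> l"
  shows "beta_num lam l j < beta_num lam l i"
  using part_mono[OF assms(1) assms(2), of j] assms unfolding beta_num_def by auto

lemma beta_inj: 
  assumes "is_partition lam"
  shows "inj_on (beta_num lam l) {1..l}"
proof (rule inj_onI)
  fix i j assume "i \<in> {1..l}" "j \<in> {1..l}" "beta_num lam l i = beta_num lam l j"
  then show "i = j" using beta_strict[OF assms, of i j l] beta_strict[OF assms, of j i l]
    by (metis atLeastAtMost_iff less_irrefl nat_neq_iff)
qed

lemma card_bset: "is_partition lam \<Longrightarrow> card (bset l lam) = l"
  unfolding bset_def using beta_inj card_image by fastforce

lemma finite_bset: "finite (bset l lam)" unfolding bset_def by auto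

lemma sorted_gt_unique:
  assumes "sorted_wrt (>) xs" "sorted_wrt (>) (ys::nat list)" "set xs = set ys"
  shows "xs = ys"
proof -
  have a: "sorted_wrt (<) (rev xs)" "sorted_wrt (<) (rev ys)"
    using assms(1,2) by (simp_all add: sorted_wrt_rev)
  then have "rev xs = rev ys"
    using sorted_distinct_set_unique[of "rev xs" "rev ys"] assms(3) by (simp add: strict_sorted_iff)
  then show ?thesis by simp
qed

lemma beta_list:
  assumes "is_partition lam"
  shows "sorted_wrt (>) (map (beta_num lam l) [1..<l+1])"
    "set (map (beta_num lam l) [1..<l+1]) = bset l lam"
proof -
  show "sorted_wrt (>) (map (beta_num lam l) [1..<l+1])"
    unfolding sorted_wrt_iff_nth_less using beta_strict[OF assms] by (auto simp del: upt_Suc)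
  show "set (map (beta_num lam l) [1..<l+1]) = bset l lam"
    unfolding bset_def by auto
qed

lemma bset_determines:
  assumes "is_partition lam" "is_partition mu" "length lam \<le> l" "length mu \<le> l"
    and "bset l lam = bset l mu"
  shows "lam = mu"
proof -
  have eq: "map (beta_num lam l) [1..<l+1] = map (beta_num mu l) [1..<l+1]"
    using sorted_gt_unique beta_list[OF assms(1)] beta_list[OF assms(2)] assms(5) by metis
  show ?thesis
  proof (rule partition_eq[OF assms(1,2)])
    fix i :: nat assume i: "1 \<le> i"
    show "part lam i = part mu i"
    proof (cases "i \<le> l")
      case True
      then have "beta_num lam l i = beta_num mu l i"
        using arg_cong[OF eq, of "\<lambda>xs. xs ! (i-1)"] i by (auto simp del: upt_Suc)
      then show ?thesis unfolding beta_num_def using True by auto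
    next
      case False
      then show ?thesis using part_zero assms(3,4) by auto
    qed
  qed
qed

lemma partition_of_fun:
  fixes f :: "nat \<Rightarrow> nat"
  assumes mono: "\<And>i. 1 \<le> i \<Longrightarrow> f (Suc i) \<le> f i" and zero: "f (Suc N) = 0"
  shows "\<exists>mu. is_partition mu \<and> (\<forall>i\<ge>1. part mu i = f i) \<and> length mu \<le> N"
proof -
  have am: "f j \<le> f i" if "1 \<le> i" "i \<le> j" for i j
    using that
  proof (induction j)
    case (Suc j)
    then show ?case
      by (cases "i = Suc j") (use mono[of j] in \<open>auto\<close>)
  qed simp
  define K where "K = (LEAST k. f (Suc k) = 0)"
  have K1: "f (Suc K) = 0" unfolding K_def by (rule LeastI[of _ N], rule zero)
  have K2: "K \<le> N" unfolding K_def by (rule Least_le, rule zero)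
  have pos: "f i \<noteq> 0" if "1 \<le> i" "i \<le> K" for i
  proof
    assume "f i = 0"
    then have "K \<le> i - 1" unfolding K_def using that by (intro Least_le) auto
    then show False using that by auto
  qed
  define mu where "mu = map f [1..<K+1]"
  have pm: "part mu i = f i" if "1 \<le> i" for i
  proof (cases "i \<le> K")
    case True then show ?thesis unfolding mu_def part_def using that by (auto simp del: upt_Suc)
  next
    case False
    then have "f i \<le> f (Suc K)" using am[of "Suc K" i] by auto
    then show ?thesis using K1 False unfolding mu_def part_def by auto
  qed
  have "is_partition mu"
    unfolding is_partition_def
  proof
    show "sorted_wrt (\<ge>) mu" unfolding mu_def sorted_wrt_iff_nth_less using am by (auto simp del: upt_Suc)
    show "0 \<notin> set mu" unfolding mu_def using pos by (fastforce simp del: upt_Suc)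
  qed
  moreover have "length mu \<le> N" unfolding mu_def using K2 by simp
  ultimately show ?thesis using pm by blast
qed

definition strip :: "(nat \<Rightarrow> nat) \<Rightarrow> (nat \<Rightarrow> nat) \<Rightarrow> nat \<Rightarrow> nat \<Rightarrow> bool" where
  "strip L M r s \<longleftrightarrow> 1 \<le> r \<and> r \<le> s \<and> (\<forall>i. 1 \<le> i \<and> (i < r \<or> s < i) \<longrightarrow> M i = L i) \<and>
     (\<forall>i. r \<le> i \<and> i < s \<longrightarrow> M i + 1 = L (Suc i)) \<and> M s < L s"

lemma strip_lt:
  assumes "strip L M r s" "\<And>i. 1 \<le> i \<Longrightarrow> L (Suc i) \<le> L i" "r \<le> i" "i \<le> s"
  shows "M i < L i"
proof (cases "i = s")
  case False
  then have "M i + 1 = L (Suc i)" using assms unfolding strip_def by auto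
  moreover have "L (Suc i) \<le> L i" using assms(2)[of i] assms(1,3) unfolding strip_def by auto
  ultimately show ?thesis by auto
qed (use assms in \<open>auto simp: strip_def\<close>)

lemma strip_skew:
  assumes "strip L M r s" "\<And>i. 1 \<le> i \<Longrightarrow> L (Suc i) \<le> L i"
  shows "{(i,j). 1 \<le> i \<and> M i < j \<and> j \<le> L i} = Sigma {r..s} (\<lambda>i. {M i<..L i})"
proof -
  have "\<And>i. 1 \<le> i \<Longrightarrow> i < r \<or> s < i \<Longrightarrow> M i = L i" using assms(1) unfolding strip_def by auto
  moreover have "1 \<le> r" using assms(1) unfolding strip_def by auto
  ultimately show ?thesis by fastforce
qed

lemma strip_card:
  assumes "strip L M r s" "\<And>i. 1 \<le> i \<Longrightarrow> L (Suc i) \<le> L i"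
  shows "card (Sigma {r..s} (\<lambda>i. {M i<..L i})) + M s = L r + (s - r)"
proof -
  have lt: "\<And>i. r \<le> i \<Longrightarrow> i \<le> s \<Longrightarrow> M i < L i" using strip_lt[OF assms] by auto
  have ind: "(\<Sum>i\<in>{r..s'}. L i - M i) + M s' = L r + (s' - r)" if "r \<le> s'" "s' \<le> s" for s'
    using that
  proof (induction s')
    case 0
    then show ?case using lt[of 0] by auto
  next
    case (Suc s')
    show ?case
    proof (cases "r = Suc s'")
      case True
      then show ?thesis using lt[of r] Suc by auto
    next
      case False
      then have r: "r \<le> s'" using Suc by auto
      have IH: "(\<Sum>i\<in>{r..s'}. L i - M i) + M s' = L r + (s' - r)" using Suc r by auto
      have e: "M s' + 1 = L (Suc s')" using assms(1) r Suc unfolding strip_def by auto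
      have l: "M (Suc s') < L (Suc s')" using lt[of "Suc s'"] Suc r by auto
      have "(\<Sum>i\<in>{r..Suc s'}. L i - M i) = (\<Sum>i\<in>{r..s'}. L i - M i) + (L (Suc s') - M (Suc s'))"
        using r by (simp add: sum.atLeast_Suc_atMost_Suc_shift sum.cl_ivl_Suc)
      then show ?thesis using IH e l r by auto
    qed
  qed
  have "card (Sigma {r..s} (\<lambda>i. {M i<..L i})) = (\<Sum>i\<in>{r..s}. L i - M i)"
    by (simp add: card_SigmaI)
  then show ?thesis using ind[of s] assms(1) unfolding strip_def by auto
qed

lemma strip_bset:
  assumes lam: "is_partition lam" and mu: "is_partition mu" and sl: "s \<le> l"
    and st: "strip (part lam) (part mu) r s"
  shows "beta_num mu l s + (part lam r + (s - r) - part mu s) = beta_num lam l r"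
    and "bset l mu = insert (beta_num mu l s) (bset l lam - {beta_num lam l r})"
proof -
  let ?L = "part lam" and ?M = "part mu"
  have r1: "1 \<le> r" and rs: "r \<le> s" using st unfolding strip_def by auto
  have anti: "\<And>i. 1 \<le> i \<Longrightarrow> ?L (Suc i) \<le> ?L i" using part_mono[OF lam] by auto
  have lt: "?M i < ?L i" if "r \<le> i" "i \<le> s" for i using strip_lt[OF st anti that] .
  have eqs: "?M i + 1 = ?L (Suc i)" if "r \<le> i" "i < s" for i using st that unfolding strip_def by auto
  have out: "?M i = ?L i" if "1 \<le> i" "i < r \<or> s < i" for i using st that unfolding strip_def by auto
  have mono_rs: "?L s \<le> ?L r" using part_mono[OF lam r1 rs] .
  have "?M s < ?L s" using lt rs by auto
  then show "beta_num mu l s + (part lam r + (s - r) - part mu s) = beta_num lam l r"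
    unfolding beta_num_def using mono_rs sl rs by auto
  have A: "{1..l} = {1..<r} \<union> {r..<s} \<union> {s} \<union> {s<..l}" using r1 rs sl by auto
  have B: "{1..l} - {r} = {1..<r} \<union> Suc ` {r..<s} \<union> {s<..l}"
  proof -
    have "Suc ` {r..<s} = {r<..s}" by (auto simp: image_Suc_atLeastLessThan)
    then show ?thesis using r1 rs sl by auto
  qed
  have C1: "beta_num mu l ` {1..<r} = beta_num lam l ` {1..<r}"
    by (rule image_cong) (auto simp: beta_num_def out)
  have C3: "beta_num mu l ` {s<..l} = beta_num lam l ` {s<..l}"
    by (rule image_cong) (auto simp: beta_num_def out)
  have C2: "beta_num mu l ` {r..<s} = beta_num lam l ` (Suc ` {r..<s})"
    unfolding image_image
  proof (rule image_cong)
    fix i assume i: "i \<in> {r..<s}"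
    then have "?M i + 1 = ?L (Suc i)" using eqs by auto
    then show "beta_num mu l i = beta_num lam l (Suc i)" unfolding beta_num_def using i sl by auto
  qed simp
  have D: "beta_num lam l ` ({1..l} - {r}) = bset l lam - {beta_num lam l r}"
    unfolding bset_def using inj_on_image_set_diff[OF beta_inj[OF lam, of l], of "{1..l}" "{r}"] r1 rs sl
    by auto
  show "bset l mu = insert (beta_num mu l s) (bset l lam - {beta_num lam l r})"
  proof -
    have "bset l mu = beta_num mu l ` ({1..<r} \<union> {r..<s} \<union> {s} \<union> {s<..l})"
      unfolding bset_def using A by metis
    also have "\<dots> = insert (beta_num mu l s) (beta_num lam l ` ({1..<r} \<union> Suc ` {r..<s} \<union> {s<..l}))"
      by (simp only: image_Un C1 C2 C3 image_insert image_empty) blast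
    also have "\<dots> = insert (beta_num mu l s) (beta_num lam l ` ({1..l} - {r}))"
      using B by metis
    finally show ?thesis using D by simp
  qed
qed

lemma cut_lemma:
  assumes path: "(\<lambda>x y. x \<in> D \<and> y \<in> D \<and> cell_adj x y)\<^sup>*\<^sup>* c d"
    and noadj: "\<And>j. (i, j) \<in> D \<Longrightarrow> (Suc i, j) \<in> D \<Longrightarrow> False"
    and c: "fst c \<le> i"
  shows "fst d \<le> i"
  using path
proof (induction rule: rtranclp_induct)
  case base
  then show ?case using c .
next
  case (step y z)
  obtain y1 y2 where y: "y = (y1, y2)" by force
  obtain z1 z2 where z: "z = (z1, z2)" by force
  show ?case
  proof (rule ccontr)
    assume "\<not> fst z \<le> i"
    then have "z1 = Suc i" "y1 = i" "y2 = z2" using step y z unfolding cell_adj_def by auto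
    then show False using noadj[of y2] step y z by auto
  qed
qed

lemma rh_strip:
  assumes lam: "is_partition lam" and t: "1 \<le> t" and rh: "remove_rim_hook t lam mu"
  shows "\<exists>r s. strip (part lam) (part mu) r s \<and> s \<le> length lam \<and>
               t = part lam r + (s - r) - part mu s"
proof -
  let ?L = "part lam" and ?M = "part mu"
  define D where "D = diagram lam - diagram mu"
  have mu: "is_partition mu" and sub: "diagram mu \<subseteq> diagram lam" and cardD: "card D = t"
    and conn: "cells_connected D" and no2: "no_2x2_square D"
    using rh unfolding remove_rim_hook_def D_def by auto
  have le: "\<And>i. 1 \<le> i \<Longrightarrow> ?M i \<le> ?L i" using sub diagram_subset_iff by auto
  have Deq: "D = {(i,j). 1 \<le> i \<and> ?M i < j \<and> j \<le> ?L i}"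
    unfolding D_def diagram_def by auto
  have antiL: "\<And>i. 1 \<le> i \<Longrightarrow> ?L (Suc i) \<le> ?L i" using part_mono[OF lam] by auto
  have antiM: "\<And>i. 1 \<le> i \<Longrightarrow> ?M (Suc i) \<le> ?M i" using part_mono[OF mu] by auto
  have nosq: "?L (Suc i) \<le> ?M i + 1" if i: "1 \<le> i" for i
  proof (rule ccontr)
    assume h: "\<not> ?L (Suc i) \<le> ?M i + 1"
    let ?j = "?M i + 1"
    have "(i, ?j) \<in> D" "(Suc i, ?j) \<in> D" "(i, Suc ?j) \<in> D" "(Suc i, Suc ?j) \<in> D"
      unfolding Deq using h i antiL[OF i] antiM[OF i] by auto
    then show False using no2 unfolding no_2x2_square_def by blast
  qed
  define R where "R = {i. 1 \<le> i \<and> ?M i < ?L i}"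
  have finR: "finite R"
  proof -
    have "R \<subseteq> {1..length lam}"
    proof
      fix i assume "i \<in> R"
      then show "i \<in> {1..length lam}" using part_zero[of lam i] unfolding R_def
        by (cases "i \<le> length lam") auto
    qed
    then show ?thesis using finite_subset by blast
  qed
  have "D \<noteq> {}" using cardD t by auto
  then have neR: "R \<noteq> {}" unfolding Deq R_def by auto
  define r where "r = Min R"
  define s where "s = Max R"
  have rR: "r \<in> R" and sR: "s \<in> R" unfolding r_def s_def using finR neR by auto
  have rs: "r \<le> s" unfolding r_def s_def using finR neR by auto
  have r1: "1 \<le> r" using rR unfolding R_def by auto
  have outside: "?M i = ?L i" if "1 \<le> i" "i < r \<or> s < i" for i
  proof -
    have "i \<notin> R"
    proof
      assume "i \<in> R"
      then have "r \<le> i" "i \<le> s" unfolding r_def s_def using finR by auto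
      then show False using that by auto
    qed
    then show ?thesis using le[of i] that unfolding R_def by auto
  qed
  have cut: "?M i < ?L (Suc i)" if "r \<le> i" "i < s" for i
  proof (rule ccontr)
    assume h: "\<not> ?M i < ?L (Suc i)"
    have c: "(r, ?L r) \<in> D" and d: "(s, ?L s) \<in> D" using rR sR unfolding Deq R_def by auto
    then have path: "(\<lambda>x y. x \<in> D \<and> y \<in> D \<and> cell_adj x y)\<^sup>*\<^sup>* (r, ?L r) (s, ?L s)"
      using conn unfolding cells_connected_def by blast
    have "fst (s, ?L s) \<le> i"
    proof (rule cut_lemma[OF path])
      fix j assume "(i, j) \<in> D" "(Suc i, j) \<in> D"
      then show False using h unfolding Deq by auto
    qed (use that in auto)
    then show False using that by auto
  qed
  have st: "strip ?L ?M r s"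
    unfolding strip_def
  proof (intro conjI allI impI)
    show "1 \<le> r" by (rule r1)
    show "r \<le> s" by (rule rs)
    show "?M s < ?L s" using sR unfolding R_def by auto
  next
    fix i assume "1 \<le> i \<and> (i < r \<or> s < i)"
    then show "?M i = ?L i" using outside by auto
  next
    fix i assume i: "r \<le> i \<and> i < s"
    then show "?M i + 1 = ?L (Suc i)" using cut[of i] nosq[of i] r1 by auto
  qed
  have slen: "s \<le> length lam"
  proof (rule ccontr)
    assume "\<not> s \<le> length lam"
    then have "?L s = 0" using part_zero by auto
    then show False using sR unfolding R_def by auto
  qed
  have "card D + ?M s = ?L r + (s - r)"
    using strip_card[OF st antiL] strip_skew[OF st antiL] Deq by auto
  then have "t = ?L r + (s - r) - ?M s" using cardD by auto
  then show ?thesis using st slen by blast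
qed

lemma rh_bead:
  assumes lam: "is_partition lam" and len: "length lam \<le> l" and t: "1 \<le> t"
    and rh: "remove_rim_hook t lam mu"
  shows "is_partition mu" "length mu \<le> length lam"
    "\<exists>x\<in>bset l lam. t \<le> x \<and> x - t \<notin> bset l lam \<and> bset l mu = insert (x - t) (bset l lam - {x})"
proof -
  show mu: "is_partition mu" using rh unfolding remove_rim_hook_def by auto
  have le: "\<And>i. 1 \<le> i \<Longrightarrow> part mu i \<le> part lam i"
    using rh diagram_subset_iff unfolding remove_rim_hook_def by auto
  show "length mu \<le> length lam"
  proof (rule ccontr)
    assume h: "\<not> length mu \<le> length lam"
    then have "part mu (length mu) \<ge> 1" using part_pos[OF mu] by auto
    moreover have "part lam (length mu) = 0" using part_zero h by auto
    ultimately show False using le[of "length mu"] h by auto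
  qed
  obtain r s where st: "strip (part lam) (part mu) r s" and sl: "s \<le> length lam"
    and tt: "t = part lam r + (s - r) - part mu s" using rh_strip[OF lam t rh] by blast
  have sl': "s \<le> l" using sl len by auto
  have r: "1 \<le> r" "r \<le> s" using st unfolding strip_def by auto
  note sb = strip_bset[OF lam mu sl' st]
  let ?x = "beta_num lam l r"
  have xin: "?x \<in> bset l lam" unfolding bset_def using r sl' by auto
  have tx: "t \<le> ?x" and ye: "beta_num mu l s = ?x - t" using sb(1) tt by auto
  have beq: "bset l mu = insert (?x - t) (bset l lam - {?x})" using sb(2) ye by simp
  have nin: "?x - t \<notin> bset l lam"
  proof
    assume h: "?x - t \<in> bset l lam"
    have "?x - t \<noteq> ?x" using t tx by auto
    then have "insert (?x - t) (bset l lam - {?x}) = bset l lam - {?x}" using h by auto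
    then have "card (bset l mu) = card (bset l lam) - 1" using beq xin finite_bset by auto
    then show False using card_bset[OF mu] card_bset[OF lam] len r sl' by auto
  qed
  show "\<exists>x\<in>bset l lam. t \<le> x \<and> x - t \<notin> bset l lam \<and> bset l mu = insert (x - t) (bset l lam - {x})"
    using xin tx nin beq by blast
qed

lemma row_conn:
  assumes "\<And>k. j' \<le> k \<Longrightarrow> k \<le> j \<Longrightarrow> (i, k) \<in> D" "j' \<le> j"
  shows "(\<lambda>x y. x \<in> D \<and> y \<in> D \<and> cell_adj x y)\<^sup>*\<^sup>* (i, j) (i, j')"
proof -
  have "(\<lambda>x y. x \<in> D \<and> y \<in> D \<and> cell_adj x y)\<^sup>*\<^sup>* (i, k) (i, j')" if "j' \<le> k" "k \<le> j" for k
    using that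
  proof (induction k)
    case 0 then show ?case by auto
  next
    case (Suc k)
    show ?case
    proof (cases "j' = Suc k")
      case False
      then have IH: "(\<lambda>x y. x \<in> D \<and> y \<in> D \<and> cell_adj x y)\<^sup>*\<^sup>* (i, k) (i, j')" using Suc by auto
      have "(i, Suc k) \<in> D" "(i, k) \<in> D" using assms(1) Suc False by auto
      then have st: "(\<lambda>x y. x \<in> D \<and> y \<in> D \<and> cell_adj x y) (i, Suc k) (i, k)"
        by (auto simp: cell_adj_def)
      show ?thesis by (rule converse_rtranclp_into_rtranclp[OF st IH])
    qed auto
  qed
  then show ?thesis using assms(2) by auto
qed

lemma bead_rh:
  assumes lam: "is_partition lam" and len: "length lam \<le> l" and t: "1 \<le> t"
    and xin: "x \<in> bset l lam" and tx: "t \<le> x" and yn: "x - t \<notin> bset l lam"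
  shows "\<exists>mu. remove_rim_hook t lam mu \<and> length mu \<le> length lam \<and>
              bset l mu = insert (x - t) (bset l lam - {x})"
proof -
  let ?L = "part lam" and ?b = "beta_num lam l"
  define y where "y = x - t"
  obtain r where r: "1 \<le> r" "r \<le> l" and xr: "x = ?b r" using xin unfolding bset_def by auto
  have antiL: "\<And>i. 1 \<le> i \<Longrightarrow> ?L (Suc i) \<le> ?L i" using part_mono[OF lam] by auto
  define S where "S = {i \<in> {r..l}. y < ?b i}"
  have rS: "r \<in> S" unfolding S_def y_def using r xr t tx by auto
  have finS: "finite S" unfolding S_def by auto
  define s where "s = Max S"
  have sS: "s \<in> S" unfolding s_def using Max_in[OF finS] rS by blast
  have rs: "r \<le> s" unfolding s_def using Max_ge[OF finS rS] .
  have sl: "s \<le> l" and ys: "y < ?b s" using sS unfolding S_def by auto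
  have yb: "y \<notin> bset l lam" using yn y_def by simp
  have ys1: "?b (Suc s) < y" if "s < l"
  proof -
    have "Suc s \<notin> S" using finS unfolding s_def by (metis Max_ge Suc_n_not_le_n)
    then have "?b (Suc s) \<le> y" unfolding S_def using that rs by auto
    moreover have "?b (Suc s) \<noteq> y" using yb that unfolding bset_def by (metis atLeastAtMost_iff image_eqI le_add1 plus_1_eq_Suc Suc_leI)
    ultimately show ?thesis by auto
  qed
  have Ls: "?L s \<ge> 1"
  proof (rule ccontr)
    assume "\<not> ?L s \<ge> 1"
    then have L0: "?L s = 0" by auto
    have "?L j = 0" if "s \<le> j" for j using part_mono[OF lam, of s j] that L0 r rs by auto
    then have bj: "?b j = l - j" if "s \<le> j" for j using that unfolding beta_num_def by auto
    have "y < l - s" using ys bj[of s] by auto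
    then have "?b (l - y) = y" using bj[of "l - y"] by auto
    moreover have "l - y \<in> {1..l}" using \<open>y < l - s\<close> by auto
    ultimately show False using yb unfolding bset_def by force
  qed
  have slen: "s \<le> length lam" using Ls part_zero[of lam s] by (cases "s \<le> length lam") auto
  have yls: "l - s \<le> y"
  proof (cases "s < l")
    case True then show ?thesis using ys1 unfolding beta_num_def by auto
  qed (use sl in auto)
  define M where "M i = (if i < r \<or> s < i then ?L i else if i < s then ?L (Suc i) - 1 else y + s - l)" for i
  have LSi: "?L (Suc i) \<ge> 1" if "r \<le> i" "i < s" for i
    using part_mono[OF lam, of "Suc i" s] that Ls r by auto
  have Msl: "M s < ?L s" unfolding M_def using ys rs sl Ls unfolding beta_num_def by auto
  have LSs: "?L (Suc s) \<le> M s"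
  proof (cases "s < l")
    case True then show ?thesis using ys1 rs unfolding M_def beta_num_def by auto
  next
    case False then have "?L (Suc s) = 0" using part_zero[of lam "Suc s"] len sl by auto
    then show ?thesis by auto
  qed
  have antiM: "M (Suc i) \<le> M i" if "1 \<le> i" for i
  proof -
    consider "Suc i < r" | "Suc i = r" | "r \<le> i \<and> Suc i < s" | "r \<le> i \<and> Suc i = s" | "i = s" | "s < i"
      using rs by linarith
    then show ?thesis
    proof cases
      case 1 then show ?thesis unfolding M_def using antiL[OF that] by auto
    next
      case 2
      have "M r \<le> ?L r" using Msl antiL[of r] r rs by (cases "r = s") (auto simp: M_def)
      then show ?thesis using 2 antiL[OF that] unfolding M_def by auto
    next
      case 3 then show ?thesis unfolding M_def using antiL[of "Suc i"] by auto
    next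
      case 4 then show ?thesis using Msl unfolding M_def by auto
    next
      case 5 then show ?thesis using LSs unfolding M_def by auto
    next
      case 6 then show ?thesis unfolding M_def using antiL[OF that] by auto
    qed
  qed
  have MSN: "M (Suc (length lam)) = 0" unfolding M_def using slen part_zero[of lam] by auto
  obtain mu where mu: "is_partition mu" and pm: "\<And>i. 1 \<le> i \<Longrightarrow> part mu i = M i"
    and lmu: "length mu \<le> length lam"
    using partition_of_fun[of M "length lam", OF antiM MSN] by blast
  have st: "strip ?L (part mu) r s"
    unfolding strip_def
  proof (intro conjI allI impI)
    fix i assume i: "r \<le> i \<and> i < s"
    then have "part mu i = ?L (Suc i) - 1" using pm[of i] r unfolding M_def by auto
    then show "part mu i + 1 = ?L (Suc i)" using LSi[of i] i by auto
  next
    show "part mu s < ?L s" using pm[of s] Msl r rs by auto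
  qed (use r rs pm in \<open>auto simp: M_def\<close>)
  note sb = strip_bset[OF lam mu sl st]
  have bms: "beta_num mu l s = y" unfolding beta_num_def using pm[of s] r rs yls sl unfolding M_def by auto
  have beq: "bset l mu = insert (x - t) (bset l lam - {x})" using sb(2) bms xr y_def by simp
  have le: "part mu i \<le> ?L i" if "1 \<le> i" for i
  proof (cases "r \<le> i \<and> i \<le> s")
    case True then show ?thesis using strip_lt[OF st antiL, of i] by auto
  next
    case False then show ?thesis using st that unfolding strip_def by auto
  qed
  define D where "D = diagram lam - diagram mu"
  have Deq0: "D = {(i,j). 1 \<le> i \<and> part mu i < j \<and> j \<le> ?L i}"
    unfolding D_def diagram_def by auto
  have Deq: "D = Sigma {r..s} (\<lambda>i. {part mu i<..?L i})" using Deq0 strip_skew[OF st antiL] by simp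
  have cD: "card D + part mu s = ?L r + (s - r)" using strip_card[OF st antiL] Deq by simp
  have cardD: "card D = t"
  proof -
    have "x = ?L r + l - r" using xr unfolding beta_num_def by simp
    moreover have "part mu s = y + s - l" using pm[of s] r rs unfolding M_def by auto
    ultimately show ?thesis using cD y_def yls tx r rs sl by auto
  qed
  have nsq: "no_2x2_square D"
    unfolding no_2x2_square_def
  proof
    assume "\<exists>i j. (i, j) \<in> D \<and> (Suc i, j) \<in> D \<and> (i, Suc j) \<in> D \<and> (Suc i, Suc j) \<in> D"
    then obtain i j where h: "(i, j) \<in> D" "(Suc i, Suc j) \<in> D" by blast
    then have i1: "1 \<le> i" and ri: "r \<le> i" and isx: "i \<le> s" using Deq r by auto
    have "part mu i < j" "Suc j \<le> ?L (Suc i)" using h Deq0 by auto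
    moreover have "?L (Suc i) \<le> part mu i + 1"
    proof (cases "i < s")
      case True then show ?thesis using st ri unfolding strip_def by auto
    next
      case False then show ?thesis using LSs pm[of s] isx r rs by auto
    qed
    ultimately show False by auto
  qed
  let ?R = "\<lambda>x y. x \<in> D \<and> y \<in> D \<and> cell_adj x y"
  have symR: "symp ?R" unfolding symp_def cell_adj_def by auto
  have inD: "(i, k) \<in> D \<longleftrightarrow> r \<le> i \<and> i \<le> s \<and> part mu i < k \<and> k \<le> ?L i" for i k
    using Deq by auto
  have tobase: "?R\<^sup>*\<^sup>* (i, j) (s, part mu s + 1)" if "(i, j) \<in> D" for i j
  proof -
    have "\<forall>i j. (i, j) \<in> D \<and> s - i = d \<longrightarrow> ?R\<^sup>*\<^sup>* (i, j) (s, part mu s + 1)" for d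
    proof (induction d)
      case 0
      show ?case
      proof (intro allI impI)
        fix i j assume h: "(i, j) \<in> D \<and> s - i = 0"
        then have "i = s" using inD by auto
        have "?R\<^sup>*\<^sup>* (s, j) (s, part mu s + 1)"
          by (rule row_conn) (use h \<open>i = s\<close> inD in auto)
        then show "?R\<^sup>*\<^sup>* (i, j) (s, part mu s + 1)" using \<open>i = s\<close> by simp
      qed
    next
      case (Suc d)
      show ?case
      proof (intro allI impI)
        fix i j assume h: "(i, j) \<in> D \<and> s - i = Suc d"
        then have ri: "r \<le> i" and isx: "i < s" using inD by auto
        have e: "part mu i + 1 = ?L (Suc i)" using st ri isx unfolding strip_def by auto
        have lt: "part mu (Suc i) < ?L (Suc i)" using strip_lt[OF st antiL, of "Suc i"] ri isx by auto
        have p1: "?R\<^sup>*\<^sup>* (i, j) (i, part mu i + 1)" by (rule row_conn) (use h inD in auto)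
        have c1: "(i, part mu i + 1) \<in> D" using h inD by auto
        have c2: "(Suc i, part mu i + 1) \<in> D" using inD e lt ri isx by auto
        have p2: "?R (i, part mu i + 1) (Suc i, part mu i + 1)" using c1 c2 unfolding cell_adj_def by auto
        have p3: "?R\<^sup>*\<^sup>* (Suc i, part mu i + 1) (s, part mu s + 1)"
          using Suc.IH c2 h by auto
        show "?R\<^sup>*\<^sup>* (i, j) (s, part mu s + 1)"
          using rtranclp_trans[OF rtranclp.rtrancl_into_rtrancl[OF p1 p2] p3] .
      qed
    qed
    then show ?thesis using that by blast
  qed
  have conn: "cells_connected D"
    unfolding cells_connected_def
  proof (intro ballI)
    fix c d assume c: "c \<in> D" and d: "d \<in> D"
    have "?R\<^sup>*\<^sup>* c (s, part mu s + 1)" using tobase c by (cases c) auto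
    moreover have "?R\<^sup>*\<^sup>* (s, part mu s + 1) d"
      using tobase d sympD[OF symp_rtranclp[OF symR]] by (cases d) auto
    ultimately show "?R\<^sup>*\<^sup>* c d" by auto
  qed
  have sub: "diagram mu \<subseteq> diagram lam" using le diagram_subset_iff by auto
  have "remove_rim_hook t lam mu"
    unfolding remove_rim_hook_def using mu sub cardD conn nsq D_def by auto
  then show ?thesis using lmu beq by blast
qed

definition cnt :: "nat \<Rightarrow> nat set \<Rightarrow> nat \<Rightarrow> nat" where
  "cnt t X i = card {x \<in> X. x mod t = i}"

definition coreset :: "nat \<Rightarrow> nat set \<Rightarrow> nat set" where
  "coreset t X = {x. x div t < cnt t X (x mod t)}"

lemma ncount_cnt:
  assumes "is_partition lam"
  shows "ncount t lam l i = cnt t (bset l lam) i"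
proof -
  have "{x \<in> bset l lam. x mod t = i} = beta_num lam l ` {j \<in> {1..l}. beta_num lam l j mod t = i}"
    unfolding bset_def by auto
  moreover have "inj_on (beta_num lam l) {j \<in> {1..l}. beta_num lam l j mod t = i}"
    using beta_inj[OF assms, of l] by (rule inj_on_subset) auto
  ultimately show ?thesis unfolding ncount_def cnt_def by (simp add: card_image)
qed

lemma cnt_move:
  assumes fin: "finite X" and x: "x \<in> X" and tx: "t \<le> x" and y: "x - t \<notin> X"
  shows "cnt t (insert (x - t) (X - {x})) i = cnt t X i"
proof -
  have m: "(x - t) mod t = x mod t" using tx by (simp add: le_mod_geq)
  show ?thesis
  proof (cases "x mod t = i")
    case True
    have e: "{z \<in> insert (x - t) (X - {x}). z mod t = i} = insert (x - t) ({z \<in> X. z mod t = i} - {x})"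
      using m True by auto
    have "x - t \<notin> {z \<in> X. z mod t = i} - {x}" using y by auto
    moreover have "x \<in> {z \<in> X. z mod t = i}" using x True by auto
    moreover have "finite {z \<in> X. z mod t = i}" using fin by auto
    ultimately have "card (insert (x - t) ({z \<in> X. z mod t = i} - {x})) = card {z \<in> X. z mod t = i}"
      using card_Diff1_less[of "{z \<in> X. z mod t = i}" x] by (simp add: card_Diff_singleton)
    then show ?thesis unfolding cnt_def e .
  next
    case False
    have "{z \<in> insert (x - t) (X - {x}). z mod t = i} = {z \<in> X. z mod t = i}"
      using m False by auto
    then show ?thesis unfolding cnt_def by simp
  qed
qed

lemma sum_move:
  fixes X :: "nat set"
  assumes fin: "finite X" and x: "x \<in> X" and tx: "t \<le> x" and y: "x - t \<notin> X" and t: "1 \<le> t"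
  shows "sum id (insert (x - t) (X - {x})) < sum id X"
proof -
  have "x - t \<notin> X - {x}" using y by auto
  then have "sum id (insert (x - t) (X - {x})) = (x - t) + sum id (X - {x})" using fin by simp
  moreover have "sum id X = x + sum id (X - {x})" using fin x by (simp add: sum.remove)
  ultimately show ?thesis using t tx by auto
qed

lemma closed_coreset:
  assumes fin: "finite X" and t: "1 \<le> t" and cl: "\<And>x. x \<in> X \<Longrightarrow> t \<le> x \<Longrightarrow> x - t \<in> X"
  shows "X = coreset t X"
proof -
  have down: "i + t * q' \<in> X" if "i + t * q \<in> X" "q' \<le> q" for i q q'
    using that
  proof (induction q)
    case 0 then show ?case by auto
  next
    case (Suc q)
    show ?case
    proof (cases "q' = Suc q")
      case False
      have "i + t * Suc q - t = i + t * q" by simp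
      then have "i + t * q \<in> X" using cl[OF Suc.prems(1)] by simp
      then show ?thesis using Suc False by auto
    qed (use Suc in auto)
  qed
  show ?thesis
  proof (rule set_eqI)
    fix x
    define i where "i = x mod t"
    define q where "q = x div t"
    have xe: "x = i + t * q" unfolding i_def q_def by simp
    have it: "i < t" unfolding i_def using t by auto
    have finC: "finite {z \<in> X. z mod t = i}" using fin by auto
    show "x \<in> X \<longleftrightarrow> x \<in> coreset t X"
    proof
      assume xX: "x \<in> X"
      have "(\<lambda>q'. i + t * q') ` {..q} \<subseteq> {z \<in> X. z mod t = i}"
        using down[of i q] xX xe it by auto
      moreover have "inj_on (\<lambda>q'. i + t * q') {..q}" using t by (auto simp: inj_on_def)
      ultimately have "card {..q} \<le> cnt t X i"
        unfolding cnt_def using finC card_inj_on_le by blast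
      then show "x \<in> coreset t X" unfolding coreset_def using i_def q_def by auto
    next
      assume "x \<in> coreset t X"
      then have qc: "q < cnt t X i" unfolding coreset_def i_def q_def by auto
      show "x \<in> X"
      proof (rule ccontr)
        assume xn: "x \<notin> X"
        have "{z \<in> X. z mod t = i} \<subseteq> (\<lambda>q'. i + t * q') ` {..<q}"
        proof
          fix z assume z: "z \<in> {z \<in> X. z mod t = i}"
          have ze: "z = i + t * (z div t)" using z mod_mult_div_eq[of z t] by simp
          have "z div t < q"
          proof (rule ccontr)
            assume "\<not> z div t < q"
            then have "x \<in> X" using down[of i "z div t" q] z ze xe by auto
            then show False using xn by simp
          qed
          then show "z \<in> (\<lambda>q'. i + t * q') ` {..<q}" using ze by auto
        qed
        then have "cnt t X i \<le> card ((\<lambda>q'. i + t * q') ` {..<q})" unfolding cnt_def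
          by (intro card_mono) auto
        also have "\<dots> \<le> card {..<q}" by (rule card_image_le) simp
        finally have "cnt t X i \<le> card {..<q}" .
        then show False using qc by simp
      qed
    qed
  qed
qed

lemma reach_inv:
  assumes "(remove_rim_hook t)\<^sup>*\<^sup>* lam mu" "is_partition lam" "length lam \<le> l" "1 \<le> t"
  shows "is_partition mu \<and> length mu \<le> l \<and> (\<forall>i. cnt t (bset l mu) i = cnt t (bset l lam) i)"
  using assms(1)
proof (induction rule: rtranclp_induct)
  case base then show ?case using assms by auto
next
  case (step y z)
  then have y: "is_partition y" "length y \<le> l" by auto
  note rb = rh_bead[OF y assms(4) step(2)]
  obtain x where x: "x \<in> bset l y" "t \<le> x" "x - t \<notin> bset l y"
    "bset l z = insert (x - t) (bset l y - {x})" using rb(3) by blast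
  have "\<forall>i. cnt t (bset l z) i = cnt t (bset l y) i"
    using cnt_move[OF finite_bset x(1-3)] x(4) by simp
  then show ?case using rb(1,2) y step by auto
qed

lemma terminal_closed:
  assumes "is_partition mu" "length mu \<le> l" "1 \<le> t" "\<not> (\<exists>nu. remove_rim_hook t mu nu)"
  shows "bset l mu = coreset t (bset l mu)"
proof (rule closed_coreset[OF finite_bset assms(3)])
  fix x assume "x \<in> bset l mu" "t \<le> x"
  then show "x - t \<in> bset l mu" using bead_rh[OF assms(1-3)] assms(4) by blast
qed

lemma core_exists:
  assumes "is_partition lam" "length lam \<le> l" "1 \<le> t"
  shows "\<exists>mu. (remove_rim_hook t)\<^sup>*\<^sup>* lam mu \<and> \<not> (\<exists>nu. remove_rim_hook t mu nu) \<and>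
     is_partition mu \<and> length mu \<le> l \<and> bset l mu = coreset t (bset l lam)"
  using assms
proof (induction "sum id (bset l lam)" arbitrary: lam rule: less_induct)
  case less
  show ?case
  proof (cases "\<exists>x\<in>bset l lam. t \<le> x \<and> x - t \<notin> bset l lam")
    case False
    then have "\<not> (\<exists>nu. remove_rim_hook t lam nu)" using rh_bead[OF less.prems] by blast
    moreover have "bset l lam = coreset t (bset l lam)"
      using closed_coreset[OF finite_bset less.prems(3)] False by blast
    ultimately show ?thesis using less.prems by blast
  next
    case True
    then obtain x where x: "x \<in> bset l lam" "t \<le> x" "x - t \<notin> bset l lam" by blast
    obtain nu where nu: "remove_rim_hook t lam nu" "length nu \<le> length lam"
      "bset l nu = insert (x - t) (bset l lam - {x})"
      using bead_rh[OF less.prems x] by blast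
    have pnu: "is_partition nu" using nu(1) unfolding remove_rim_hook_def by auto
    have lt: "sum id (bset l nu) < sum id (bset l lam)"
      using sum_move[OF finite_bset x less.prems(3)] nu(3) by simp
    have cn: "cnt t (bset l nu) = cnt t (bset l lam)"
      using cnt_move[OF finite_bset x] nu(3) by auto
    obtain mu where mu: "(remove_rim_hook t)\<^sup>*\<^sup>* nu mu" "\<not> (\<exists>nu'. remove_rim_hook t mu nu')"
      "is_partition mu" "length mu \<le> l" "bset l mu = coreset t (bset l nu)"
      using less.hyps[OF lt pnu _ less.prems(3)] nu(2) less.prems(2) by fastforce
    have "(remove_rim_hook t)\<^sup>*\<^sup>* lam mu" using nu(1) mu(1) by (rule converse_rtranclp_into_rtranclp)
    moreover have "coreset t (bset l nu) = coreset t (bset l lam)" unfolding coreset_def cn ..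
    ultimately show ?thesis using mu by auto
  qed
qed

lemma tcore_bset:
  assumes "is_partition lam" "length lam \<le> l" "1 \<le> t"
  shows "is_partition (tcore t lam) \<and> length (tcore t lam) \<le> l \<and>
         bset l (tcore t lam) = coreset t (bset l lam)"
proof -
  obtain mu where mu: "(remove_rim_hook t)\<^sup>*\<^sup>* lam mu" "\<not> (\<exists>nu. remove_rim_hook t mu nu)"
     "is_partition mu" "length mu \<le> l" "bset l mu = coreset t (bset l lam)"
    using core_exists[OF assms] by blast
  have "tcore t lam = mu"
    unfolding tcore_def
  proof (rule the_equality)
    show "(remove_rim_hook t)\<^sup>*\<^sup>* lam mu \<and> \<not> (\<exists>nu. remove_rim_hook t mu nu)" using mu by blast
  next
    fix mu' assume h: "(remove_rim_hook t)\<^sup>*\<^sup>* lam mu' \<and> \<not> (\<exists>nu. remove_rim_hook t mu' nu)"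
    note ri = reach_inv[OF conjunct1[OF h] assms(1,2,3)]
    have "bset l mu' = coreset t (bset l mu')" using terminal_closed[of mu' l t] ri h assms(3) by blast
    also have "\<dots> = coreset t (bset l lam)" unfolding coreset_def using ri by simp
    finally have "bset l mu' = bset l mu" using mu(5) by simp
    then show "mu' = mu" using bset_determines[of mu' mu l] ri mu by blast
  qed
  then show ?thesis using mu by simp
qed

lemma sorted_gt_distinct:
  assumes "sorted_wrt (>) (xs :: nat list)"
  shows "distinct xs"
proof -
  have "sorted_wrt (<) (rev xs)" using assms by (simp add: sorted_wrt_rev)
  then have "distinct (rev xs)" by (simp add: strict_sorted_iff)
  then show ?thesis by simp
qed

lemma interval_set:
  assumes fin: "finite C" and pos: "\<And>j. j \<in> C \<Longrightarrow> 1 \<le> j"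
    and down: "\<And>j k. j \<in> C \<Longrightarrow> 1 \<le> k \<Longrightarrow> k \<le> j \<Longrightarrow> k \<in> C"
  shows "C = {1..card C}"
proof (cases "C = {}")
  case False
  define M where "M = Max C"
  have "M \<in> C" unfolding M_def using fin False by auto
  have "C = {1..M}"
  proof
    show "C \<subseteq> {1..M}" using pos fin unfolding M_def by auto
    show "{1..M} \<subseteq> C" using down \<open>M \<in> C\<close> by auto
  qed
  then show ?thesis by simp
qed simp

lemma rk_iff:
  assumes mu: "is_partition mu" and i: "1 \<le> i"
  shows "i \<le> rk mu \<longleftrightarrow> i \<le> part mu i"
proof -
  define Q where "Q = {j. 1 \<le> j \<and> j \<le> part mu j}"
  have finQ: "finite Q"
  proof -
    have "Q \<subseteq> {..length mu}"
    proof
      fix j assume "j \<in> Q"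
      then show "j \<in> {..length mu}" using part_zero[of mu j] unfolding Q_def by (cases "j \<le> length mu") auto
    qed
    then show ?thesis using finite_subset by blast
  qed
  have rkd: "rk mu = Max ({0} \<union> Q)" unfolding rk_def Q_def by simp
  show ?thesis
  proof
    assume h: "i \<le> rk mu"
    have "rk mu \<in> {0} \<union> Q" unfolding rkd using finQ by (intro Max_in) auto
    then have "rk mu \<in> Q" using h i by auto
    then have "rk mu \<le> part mu (rk mu)" "1 \<le> rk mu" unfolding Q_def by auto
    moreover have "part mu (rk mu) \<le> part mu i" using part_mono[OF mu i h] .
    ultimately show "i \<le> part mu i" using h by auto
  next
    assume "i \<le> part mu i"
    then have "i \<in> Q" unfolding Q_def using i by auto
    then show "i \<le> rk mu" unfolding rkd using finQ by (intro Max_ge) auto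
  qed
qed

lemma rk_le_length:
  assumes mu: "is_partition mu"
  shows "rk mu \<le> length mu"
proof (rule ccontr)
  assume h: "\<not> rk mu \<le> length mu"
  then have "rk mu \<le> part mu (rk mu)" using rk_iff[OF mu, of "rk mu"] by auto
  moreover have "part mu (rk mu) = 0" using part_zero h by auto
  ultimately show False using h by auto
qed

lemma beta_ge_l_iff:
  assumes mu: "is_partition mu" "1 \<le> j" "j \<le> l"
  shows "l \<le> beta_num mu l j \<longleftrightarrow> j \<le> rk mu"
  using rk_iff[OF mu(1,2)] assms unfolding beta_num_def by auto

lemma arms_props:
  assumes mu: "is_partition mu" and len: "length mu \<le> l"
  shows "sorted_wrt (>) (frob_arms mu)"
    "set (frob_arms mu) = (\<lambda>x. x - l) ` {x \<in> bset l mu. l \<le> x}"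
    "card {x \<in> bset l mu. l \<le> x} = rk mu"
proof -
  have rl: "rk mu \<le> l" using rk_le_length[OF mu] len by auto
  have pi: "i \<le> part mu i" if "1 \<le> i" "i \<le> rk mu" for i using rk_iff[OF mu that(1)] that by auto
  show "sorted_wrt (>) (frob_arms mu)"
    unfolding frob_arms_def sorted_wrt_iff_nth_less
  proof (intro allI impI)
    fix i j assume ij: "i < j" "j < length (map (\<lambda>i. part mu i - i) [1..<rk mu + 1])"
    then have "j < rk mu" by (simp del: upt_Suc)
    moreover have "part mu (Suc j) \<le> part mu (Suc i)" using part_mono[OF mu, of "Suc i" "Suc j"] ij by auto
    moreover have "Suc j \<le> part mu (Suc j)" using pi[of "Suc j"] \<open>j < rk mu\<close> by auto
    ultimately show "map (\<lambda>i. part mu i - i) [1..<rk mu + 1] ! j < map (\<lambda>i. part mu i - i) [1..<rk mu + 1] ! i"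
      using ij by (simp del: upt_Suc add: nth_upt)
  qed
  have ex: "{x \<in> bset l mu. l \<le> x} = beta_num mu l ` {1..rk mu}"
  proof -
    have "{x \<in> bset l mu. l \<le> x} = beta_num mu l ` {j \<in> {1..l}. l \<le> beta_num mu l j}"
      unfolding bset_def by auto
    also have "{j \<in> {1..l}. l \<le> beta_num mu l j} = {1..rk mu}"
      using beta_ge_l_iff[OF mu(1)] rl by auto
    finally show ?thesis .
  qed
  show "set (frob_arms mu) = (\<lambda>x. x - l) ` {x \<in> bset l mu. l \<le> x}"
    unfolding ex frob_arms_def image_image
  proof -
    have "set (map (\<lambda>i. part mu i - i) [1..<rk mu + 1]) = (\<lambda>i. part mu i - i) ` {1..rk mu}"
      by (simp del: upt_Suc add: atLeastLessThanSuc_atLeastAtMost)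
    also have "\<dots> = (\<lambda>j. beta_num mu l j - l) ` {1..rk mu}"
      by (rule image_cong) (use pi rl in \<open>auto simp: beta_num_def\<close>)
    finally show "set (map (\<lambda>i. part mu i - i) [1..<rk mu + 1]) = (\<lambda>j. beta_num mu l j - l) ` {1..rk mu}" .
  qed
  show "card {x \<in> bset l mu. l \<le> x} = rk mu"
    unfolding ex using inj_on_subset[OF beta_inj[OF mu, of l], of "{1..rk mu}"] rl
    by (simp add: card_image)
qed

lemma conj_set:
  assumes mu: "is_partition mu" and i: "1 \<le> i"
  shows "{j. 1 \<le> j \<and> i \<le> part mu j} = {1..conj_part mu i}"
proof -
  have fin: "finite {j. 1 \<le> j \<and> i \<le> part mu j}"
  proof -
    have "{j. 1 \<le> j \<and> i \<le> part mu j} \<subseteq> {..length mu}"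
    proof
      fix j assume "j \<in> {j. 1 \<le> j \<and> i \<le> part mu j}"
      then show "j \<in> {..length mu}" using part_zero[of mu j] i by (cases "j \<le> length mu") auto
    qed
    then show ?thesis using finite_subset by blast
  qed
  show ?thesis unfolding conj_part_def
  proof (rule interval_set[OF fin])
    fix j assume "j \<in> {j. 1 \<le> j \<and> i \<le> part mu j}" then show "1 \<le> j" by simp
  next
    fix j k assume "j \<in> {j. 1 \<le> j \<and> i \<le> part mu j}" "1 \<le> k" "k \<le> j"
    then show "k \<in> {j. 1 \<le> j \<and> i \<le> part mu j}" using part_mono[OF mu, of k j] by auto
  qed
qed

lemma legs_props:
  assumes mu: "is_partition mu" and len: "length mu \<le> l"
  shows "sorted_wrt (>) (frob_legs mu)"
    "set (frob_legs mu) = (\<lambda>y. l - 1 - y) ` {y. y < l \<and> y \<notin> bset l mu}"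
proof -
  have rl: "rk mu \<le> l" using rk_le_length[OF mu] len by auto
  have pi: "i \<le> part mu i" if "1 \<le> i" "i \<le> rk mu" for i using rk_iff[OF mu that(1)] that by auto
  have cmem: "i \<le> part mu j \<longleftrightarrow> j \<le> conj_part mu i" if "1 \<le> i" "1 \<le> j" for i j
  proof -
    have "j \<in> {j. 1 \<le> j \<and> i \<le> part mu j} \<longleftrightarrow> j \<in> {1..conj_part mu i}"
      by (simp only: conj_set[OF mu that(1)])
    then show ?thesis using that by simp
  qed
  have cge: "i \<le> conj_part mu i" if "1 \<le> i" "i \<le> rk mu" for i using cmem[of i i] pi that by auto
  have cle: "conj_part mu i \<le> length mu" if "1 \<le> i" for i
  proof (rule ccontr)
    assume "\<not> conj_part mu i \<le> length mu"
    moreover have "conj_part mu i \<ge> 1" using calculation by auto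
    ultimately show False using cmem[OF that, of "conj_part mu i"] part_zero[of mu "conj_part mu i"] that by auto
  qed
  have cmono: "conj_part mu (Suc i) \<le> conj_part mu i" if "1 \<le> i" for i
  proof -
    have "finite {j. 1 \<le> j \<and> i \<le> part mu j}" by (simp only: conj_set[OF mu that] finite_atLeastAtMost)
    then show ?thesis unfolding conj_part_def by (rule card_mono) auto
  qed
  show so: "sorted_wrt (>) (frob_legs mu)"
    unfolding frob_legs_def sorted_wrt_iff_nth_less
  proof (intro allI impI)
    fix i j assume ij: "i < j" "j < length (map (\<lambda>i. conj_part mu i - i) [1..<rk mu + 1])"
    then have jr: "j < rk mu" by (simp del: upt_Suc)
    have "conj_part mu (Suc j) \<le> conj_part mu (Suc i)"
    proof -
      have "conj_part mu (Suc k) \<le> conj_part mu (Suc i)" if "i \<le> k" for k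
        using that
      proof (induction k)
        case (Suc k)
        then show ?case using cmono[of "Suc k"] by (cases "i = Suc k") auto
      qed simp
      then show ?thesis using ij by auto
    qed
    moreover have "Suc j \<le> conj_part mu (Suc j)" using cge[of "Suc j"] jr by auto
    ultimately show "map (\<lambda>i. conj_part mu i - i) [1..<rk mu + 1] ! j < map (\<lambda>i. conj_part mu i - i) [1..<rk mu + 1] ! i"
      using ij by (simp del: upt_Suc add: nth_upt)
  qed
  have sub: "set (frob_legs mu) \<subseteq> (\<lambda>y. l - 1 - y) ` {y. y < l \<and> y \<notin> bset l mu}"
  proof
    fix z assume "z \<in> set (frob_legs mu)"
    then obtain i where i: "1 \<le> i" "i \<le> rk mu" and z: "z = conj_part mu i - i"
      unfolding frob_legs_def by (auto simp del: upt_Suc)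
    define m where "m = conj_part mu i"
    have mi: "i \<le> m" using cge[OF i] m_def by simp
    have ml: "m \<le> l" using cle[OF i(1)] len m_def by simp
    define y where "y = l - 1 - (m - i)"
    have yl: "y < l" using y_def mi ml i by auto
    have yn: "y \<notin> bset l mu"
    proof
      assume "y \<in> bset l mu"
      then obtain j where j: "1 \<le> j" "j \<le> l" "y = part mu j + l - j" unfolding bset_def beta_num_def by auto
      show False
      proof (cases "j \<le> m")
        case True
        then have "i \<le> part mu j" using cmem[OF i(1) j(1)] m_def by simp
        then show False using j y_def mi ml True i by auto
      next
        case False
        then have "\<not> i \<le> part mu j" using cmem[OF i(1) j(1)] m_def by simp
        then show False using j y_def mi ml False i by auto
      qed
    qed
    have "z = l - 1 - y" using y_def z m_def mi ml i by auto
    then show "z \<in> (\<lambda>y. l - 1 - y) ` {y. y < l \<and> y \<notin> bset l mu}" using yl yn by auto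
  qed
  have cX: "card (bset l mu) = l" using card_bset[OF mu] .
  have c1: "card {x \<in> bset l mu. l \<le> x} = rk mu" using arms_props(3)[OF mu len] .
  have "bset l mu = {x \<in> bset l mu. l \<le> x} \<union> {x \<in> bset l mu. x < l}" by auto
  moreover have "{x \<in> bset l mu. l \<le> x} \<inter> {x \<in> bset l mu. x < l} = {}" by auto
  moreover have "card ({x \<in> bset l mu. l \<le> x} \<union> {x \<in> bset l mu. x < l}) = card {x \<in> bset l mu. l \<le> x} + card {x \<in> bset l mu. x < l}"
    by (rule card_Un_disjoint) (auto simp: finite_bset)
  ultimately have "card (bset l mu) = card {x \<in> bset l mu. l \<le> x} + card {x \<in> bset l mu. x < l}"
    by simp
  then have c2: "card {x \<in> bset l mu. x < l} = l - rk mu" using cX c1 by auto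
  have "{y. y < l \<and> y \<notin> bset l mu} = {..<l} - {x \<in> bset l mu. x < l}" by auto
  moreover have "card ({..<l} - {x \<in> bset l mu. x < l}) = card {..<l} - card {x \<in> bset l mu. x < l}"
    by (rule card_Diff_subset) (auto simp: finite_bset)
  ultimately have c3: "card {y. y < l \<and> y \<notin> bset l mu} = rk mu"
    using c2 rl by simp
  have "inj_on (\<lambda>y. l - 1 - y) {y. y < l \<and> y \<notin> bset l mu}" by (auto simp: inj_on_def)
  then have c4: "card ((\<lambda>y. l - 1 - y) ` {y. y < l \<and> y \<notin> bset l mu}) = rk mu" using c3 by (simp add: card_image)
  have "distinct (frob_legs mu)" using so by (rule sorted_gt_distinct)
  then have "card (set (frob_legs mu)) = length (frob_legs mu)" by (rule distinct_card)
  moreover have "length (frob_legs mu) = rk mu" unfolding frob_legs_def by (simp del: upt_Suc)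
  ultimately have c5: "card (set (frob_legs mu)) = rk mu" by simp
  show "set (frob_legs mu) = (\<lambda>y. l - 1 - y) ` {y. y < l \<and> y \<notin> bset l mu}"
    using card_subset_eq[OF _ sub] c4 c5 by auto
qed

lemma take_drop_set:
  assumes "distinct ys" "idx < length ys"
  shows "set (take idx ys @ drop (Suc idx) ys) = set ys - {ys ! idx}"
proof -
  have e: "ys = take idx ys @ ys ! idx # drop (Suc idx) ys" using id_take_nth_drop assms(2) by blast
  have "distinct (take idx ys @ ys ! idx # drop (Suc idx) ys)" using assms(1) e by simp
  then have "ys ! idx \<notin> set (take idx ys) \<union> set (drop (Suc idx) ys)" by auto
  moreover have "set ys = set (take idx ys) \<union> {ys ! idx} \<union> set (drop (Suc idx) ys)"
    by (subst e) auto
  ultimately show ?thesis by auto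
qed

lemma take_drop_sorted:
  assumes "sorted_wrt (>) (ys :: nat list)" "idx < length ys"
  shows "sorted_wrt (>) (take idx ys @ drop (Suc idx) ys)"
proof -
  have e: "ys = take idx ys @ ys ! idx # drop (Suc idx) ys" using id_take_nth_drop assms(2) by blast
  have "sorted_wrt (>) (take idx ys @ ys ! idx # drop (Suc idx) ys)" using assms(1) e by simp
  then show ?thesis by (auto simp: sorted_wrt_append)
qed

lemma asym_list:
  fixes A L :: "nat list"
  assumes sA: "sorted_wrt (>) A" and sL: "sorted_wrt (>) L" and lA: "length A = r"
  shows "(\<exists>k. 1 \<le> k \<and> k \<le> r \<and> L = (take (k - 1) (map (\<lambda>a. a + 1) A) @ drop k (map (\<lambda>a. a + 1) A)) @ [0])
     \<longleftrightarrow> (\<exists>a0\<in>set A. set L = insert 0 ((\<lambda>a. a + 1) ` (set A - {a0})))"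
proof -
  define ys where "ys = map (\<lambda>a. a + 1) A"
  have sys: "sorted_wrt (>) ys" unfolding ys_def using sA by (simp add: sorted_wrt_map)
  have dys: "distinct ys" using sorted_gt_distinct[OF sys] .
  have lys: "length ys = r" unfolding ys_def using lA by simp
  have key: "set (take idx ys @ drop (Suc idx) ys) = (\<lambda>a. a + 1) ` (set A - {A ! idx})" if "idx < r" for idx
  proof -
    have "set (take idx ys @ drop (Suc idx) ys) = set ys - {ys ! idx}" using take_drop_set[OF dys] that lys by simp
    also have "\<dots> = (\<lambda>a. a + 1) ` set A - {A ! idx + 1}" unfolding ys_def using that lA by simp
    also have "\<dots> = (\<lambda>a. a + 1) ` (set A - {A ! idx})" by auto
    finally show ?thesis .
  qed
  show ?thesis
  proof
    assume "\<exists>k. 1 \<le> k \<and> k \<le> r \<and> L = (take (k - 1) (map (\<lambda>a. a + 1) A) @ drop k (map (\<lambda>a. a + 1) A)) @ [0]"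
    then obtain k where k: "1 \<le> k" "k \<le> r" "L = (take (k - 1) ys @ drop (Suc (k - 1)) ys) @ [0]"
      unfolding ys_def by auto
    have "set L = insert 0 ((\<lambda>a. a + 1) ` (set A - {A ! (k - 1)}))" using key[of "k - 1"] k by auto
    moreover have "A ! (k - 1) \<in> set A" using k lA by auto
    ultimately show "\<exists>a0\<in>set A. set L = insert 0 ((\<lambda>a. a + 1) ` (set A - {a0}))" by blast
  next
    assume "\<exists>a0\<in>set A. set L = insert 0 ((\<lambda>a. a + 1) ` (set A - {a0}))"
    then obtain a0 where a0: "a0 \<in> set A" and sLe: "set L = insert 0 ((\<lambda>a. a + 1) ` (set A - {a0}))" by blast
    obtain idx where idx: "idx < r" "A ! idx = a0" using a0 lA by (auto simp: in_set_conv_nth)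
    define R where "R = (take idx ys @ drop (Suc idx) ys) @ [0]"
    have sR: "sorted_wrt (>) R"
    proof -
      have "\<forall>x\<in>set (take idx ys @ drop (Suc idx) ys). 0 < x"
        using key[OF idx(1)] by auto
      then show ?thesis unfolding R_def using take_drop_sorted[OF sys] idx lys
        by (auto simp: sorted_wrt_append)
    qed
    have "set R = set L" unfolding R_def using key[OF idx(1)] sLe idx by auto
    then have "L = R" using sorted_gt_unique[OF sL sR] by simp
    then show "\<exists>k. 1 \<le> k \<and> k \<le> r \<and> L = (take (k - 1) (map (\<lambda>a. a + 1) A) @ drop k (map (\<lambda>a. a + 1) A)) @ [0]"
      using idx unfolding R_def ys_def by (intro exI[of _ "Suc idx"]) auto
  qed
qed

lemma asym_iff:
  assumes mu: "is_partition mu" and len: "length mu \<le> l"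
  shows "(\<exists>k. 1 \<le> k \<and> k \<le> rk mu \<and> asymmetric 1 0 k mu) \<longleftrightarrow>
    (\<exists>a0\<in>set (frob_arms mu). set (frob_legs mu) = insert 0 ((\<lambda>a. a + 1) ` (set (frob_arms mu) - {a0})))"
proof -
  have la: "length (frob_arms mu) = rk mu" unfolding frob_arms_def by (simp del: upt_Suc)
  have "(\<exists>k. 1 \<le> k \<and> k \<le> rk mu \<and> asymmetric 1 0 k mu) \<longleftrightarrow>
     (\<exists>k. 1 \<le> k \<and> k \<le> rk mu \<and> frob_legs mu = (take (k - 1) (map (\<lambda>a. a + 1) (frob_arms mu)) @ drop k (map (\<lambda>a. a + 1) (frob_arms mu))) @ [0])"
    unfolding asymmetric_def Let_def using arms_props(1)[OF mu len] la by auto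
  also have "\<dots> \<longleftrightarrow> (\<exists>a0\<in>set (frob_arms mu). set (frob_legs mu) = insert 0 ((\<lambda>a. a + 1) ` (set (frob_arms mu) - {a0})))"
    by (rule asym_list[OF arms_props(1)[OF mu len] legs_props(1)[OF mu len] la])
  finally show ?thesis .
qed

definition inY :: "nat \<Rightarrow> (nat \<Rightarrow> nat) \<Rightarrow> nat \<Rightarrow> bool" where
  "inY t c x \<longleftrightarrow> x div t < c (x mod t)"

lemma inY_rep: "0 < t \<Longrightarrow> \<rho> < t \<Longrightarrow> inY t c (\<rho> + t * q) \<longleftrightarrow> q < c \<rho>"
  unfolding inY_def by simp

lemma eq_rep:
  fixes t \<rho> \<rho>' q q' :: nat
  assumes t: "0 < t" "\<rho> < t" "\<rho>' < t"
  shows "(\<rho> + t * q = \<rho>' + t * q') \<longleftrightarrow> (\<rho> = \<rho>' \<and> q = q')"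
proof
  assume h: "\<rho> + t * q = \<rho>' + t * q'"
  have "(\<rho> + t * q) div t = (\<rho>' + t * q') div t" "(\<rho> + t * q) mod t = (\<rho>' + t * q') mod t" using h by auto
  then show "\<rho> = \<rho>' \<and> q = q'" using t by simp
qed auto

lemma le_rep:
  fixes t \<rho> q n :: nat
  assumes "0 < \<rho>" "\<rho> < t"
  shows "(\<rho> + t * q \<le> t * n) \<longleftrightarrow> q < n"
proof
  assume h: "\<rho> + t * q \<le> t * n"
  show "q < n"
  proof (rule ccontr)
    assume "\<not> q < n"
    then have "t * n \<le> t * q" by (intro mult_le_mono2) simp
    then show False using h assms by linarith
  qed
next
  assume "q < n"
  then have "t * Suc q \<le> t * n" by (intro mult_le_mono2) auto
  then show "\<rho> + t * q \<le> t * n" using assms by auto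
qed

lemma minus_rep:
  fixes t \<rho> q n :: nat
  assumes "\<rho> < t" "q < n"
  shows "t * n - (\<rho> + t * q) = (t - \<rho>) + t * (n - q - 1)"
proof -
  obtain k where n: "n = q + 1 + k" using assms(2) by (intro that[of "n - q - 1"]) auto
  have "t * n = t * q + t + t * k" unfolding n by (simp add: algebra_simps)
  then show ?thesis using n assms(1) by simp
qed

lemma plus_rep: "t * n + (\<rho> + t * q) = \<rho> + t * (n + (q::nat))"
  by (simp add: algebra_simps)

lemma pair_noE:
  fixes u v n :: nat
  assumes a1: "\<And>q. q < n \<Longrightarrow> (\<not> n - q - 1 < v) \<longleftrightarrow> n + q < u"
    and a2: "\<And>q. n \<le> q \<Longrightarrow> \<not> n + q < u"
    and b1: "\<And>q. q < n \<Longrightarrow> (\<not> n - q - 1 < u) \<longleftrightarrow> n + q < v"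
    and b2: "\<And>q. n \<le> q \<Longrightarrow> \<not> n + q < v"
  shows "u + v = 2 * n"
proof -
  have u2: "u \<le> 2 * n" using a2[of n] by auto
  have v2: "v \<le> 2 * n" using b2[of n] by auto
  have lo: "2 * n \<le> u + v"
  proof (rule ccontr)
    assume lt: "\<not> 2 * n \<le> u + v"
    then consider "u < n" | "v < n" by linarith
    then show False
    proof cases
      case 1 then show False using b1[of "n - u - 1"] lt by auto
    next
      case 2 then show False using a1[of "n - v - 1"] lt by auto
    qed
  qed
  have hi: "u + v \<le> 2 * n"
  proof (rule ccontr)
    assume gt: "\<not> u + v \<le> 2 * n"
    then consider "n < u" | "n < v" by linarith
    then show False
    proof cases
      case 1
      then have "u - n - 1 < n" using u2 by linarith
      then show False using a1[of "u - n - 1"] gt u2 1 by auto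
    next
      case 2
      then have "v - n - 1 < n" using v2 by linarith
      then show False using b1[of "v - n - 1"] gt v2 2 by auto
    qed
  qed
  show ?thesis using lo hi by simp
qed

lemma pair_E:
  fixes u v n e :: nat
  assumes a1: "\<And>q. q < n \<Longrightarrow> (\<not> n - q - 1 < v) \<longleftrightarrow> (n + q < u \<and> q \<noteq> e)"
    and a2: "\<And>q. n \<le> q \<Longrightarrow> n + q < u \<Longrightarrow> q = e"
    and ae: "n + e < u"
    and b1: "\<And>q. q < n \<Longrightarrow> (\<not> n - q - 1 < u) \<longleftrightarrow> n + q < v"
    and b2: "\<And>q. n \<le> q \<Longrightarrow> \<not> n + q < v"
  shows "u + v = 2 * n + 1"
proof -
  have vn: "v \<le> n"
  proof (rule ccontr)
    assume "\<not> v \<le> n"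
    then have "n + (v - n - 1) < v" by auto
    moreover have "v - n - 1 < n" using b2[of n] \<open>\<not> v \<le> n\<close> by auto
    ultimately have "\<not> n - (v - n - 1) - 1 < u" using b1 by blast
    then show False using ae by auto
  qed
  have eT1: "n - v \<le> e"
  proof (cases "e < n")
    case True
    then have "\<not> (\<not> n - e - 1 < v)" using a1[of e] by auto
    then show ?thesis by auto
  qed auto
  show ?thesis
  proof (rule ccontr)
    assume ne: "u + v \<noteq> 2 * n + 1"
    then consider "u + v \<le> 2 * n" | "u + v \<ge> 2 * n + 2" by linarith
    then show False
    proof cases
      case 1 then show False using ae eT1 vn by auto
    next
      case 2
      define q where "q = (if n - v = e then n - v + 1 else n - v)"
      have qe: "q \<noteq> e" unfolding q_def by auto
      have qu: "n + q < u" unfolding q_def using 2 vn by auto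
      show False
      proof (cases "q < n")
        case True
        then have "\<not> n - q - 1 < v" using a1[of q] qe qu by auto
        moreover have "n - v \<le> q" unfolding q_def by auto
        ultimately show False using True by arith
      next
        case False
        then show False using a2[of q] qe qu by auto
      qed
    qed
  qed
qed

lemma self_E:
  fixes u n e :: nat
  assumes a1: "\<And>q. q < n \<Longrightarrow> (\<not> n - q - 1 < u) \<longleftrightarrow> (n + q < u \<and> q \<noteq> e)"
    and a2: "\<And>q. n \<le> q \<Longrightarrow> n + q < u \<Longrightarrow> q = e"
    and ae: "n + e < u"
  shows "u = n + 1"
proof -
  have all: "\<not> n + q < u" if "q \<noteq> e" for q
  proof (cases "q < n")
    case True
    then show ?thesis using a1[of q] that ae by auto
  next
    case False
    then show ?thesis using a2[of q] that by auto
  qed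
  have "\<not> n + (if e = 0 then 1 else 0) < u" by (rule all) auto
  then show ?thesis using ae by (cases "e = 0") auto
qed

definition condB :: "nat \<Rightarrow> nat \<Rightarrow> (nat \<Rightarrow> nat) \<Rightarrow> nat \<Rightarrow> bool" where
  "condB t n c xa \<longleftrightarrow> inY t c xa \<and> t * n < xa \<and>
     (\<forall>z. (z \<le> t * n \<and> \<not> inY t c (t * n - z)) \<longleftrightarrow> (z = 0 \<or> (1 \<le> z \<and> inY t c (t * n + z) \<and> t * n + z \<noteq> xa)))"

definition condA :: "nat \<Rightarrow> nat \<Rightarrow> (nat \<Rightarrow> nat) \<Rightarrow> bool" where
  "condA t n c \<longleftrightarrow> (\<exists>i0\<in>{1..t div 2}. c 0 = n \<and>
     (\<forall>i\<in>{1..t div 2}. c i + c (t - i) = (if i = i0 then 2 * n + 1 + (if 2 * i0 = t then 1 else 0) else 2 * n)))"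

lemma E_back:
  assumes t2: "2 \<le> t" and n1: "1 \<le> n" and cb: "condB t n c xa"
  shows "condA t n c"
proof -
  have t0: "0 < t" using t2 by auto
  have C: "(z \<le> t * n \<and> \<not> inY t c (t * n - z)) \<longleftrightarrow> (z = 0 \<or> (1 \<le> z \<and> inY t c (t * n + z) \<and> t * n + z \<noteq> xa))" for z
    using cb unfolding condB_def by blast
  have xaY: "inY t c xa" and xan: "t * n < xa" using cb unfolding condB_def by auto
  have "inY t c (0 + t * n) \<longleftrightarrow> n < c 0" by (rule inY_rep[OF t0]) (use t0 in auto)
  then have c0le: "c 0 \<le> n" using C[of 0] by auto
  have e1: "t * n - t = 0 + t * (n - 1)" by (simp add: diff_mult_distrib2)
  have e2: "t * n + t = 0 + t * (n + 1)" by (simp add: algebra_simps)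
  have "inY t c (0 + t * (n - 1)) \<longleftrightarrow> n - 1 < c 0" by (rule inY_rep[OF t0]) (use t0 in auto)
  moreover have "inY t c (0 + t * (n + 1)) \<longleftrightarrow> n + 1 < c 0" by (rule inY_rep[OF t0]) (use t0 in auto)
  moreover have "t \<le> t * n" using n1 by simp
  ultimately have "n - 1 < c 0" using C[of t] c0le e1 e2 t0 by auto
  then have c0: "c 0 = n" using c0le n1 by auto
  define \<rho>a where "\<rho>a = xa mod t"
  define qa where "qa = xa div t"
  have xae: "xa = \<rho>a + t * qa" unfolding \<rho>a_def qa_def by simp
  have \<rho>at: "\<rho>a < t" unfolding \<rho>a_def using t0 by simp
  have qac: "qa < c \<rho>a" using xaY unfolding inY_def \<rho>a_def qa_def .
  have qan: "n \<le> qa"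
  proof (rule ccontr)
    assume "\<not> n \<le> qa"
    then have "t * Suc qa \<le> t * n" by (intro mult_le_mono2) auto
    then show False using xae xan \<rho>at by auto
  qed
  have \<rho>a0: "0 < \<rho>a"
  proof (rule ccontr)
    assume "\<not> 0 < \<rho>a"
    then show False using qac qan c0 by auto
  qed
  have R: "(q < n \<longrightarrow> ((\<not> n - q - 1 < c (t - \<rho>)) \<longleftrightarrow> (n + q < c \<rho> \<and> \<not> (\<rho> = \<rho>a \<and> n + q = qa)))) \<and>
           (n \<le> q \<longrightarrow> n + q < c \<rho> \<longrightarrow> \<rho> = \<rho>a \<and> n + q = qa)"
    if \<rho>: "0 < \<rho>" "\<rho> < t" for \<rho> q
  proof -
    define z where "z = \<rho> + t * q"
    have z1: "1 \<le> z" "z \<noteq> 0" unfolding z_def using \<rho> by auto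
    have zle: "z \<le> t * n \<longleftrightarrow> q < n" unfolding z_def by (rule le_rep[OF \<rho>])
    have zp: "t * n + z = \<rho> + t * (n + q)" unfolding z_def by (rule plus_rep)
    have inp: "inY t c (t * n + z) \<longleftrightarrow> n + q < c \<rho>" unfolding zp by (rule inY_rep[OF t0 \<rho>(2)])
    have eqa: "t * n + z = xa \<longleftrightarrow> (\<rho> = \<rho>a \<and> n + q = qa)" unfolding zp xae by (rule eq_rep[OF t0 \<rho>(2) \<rho>at])
    show ?thesis
    proof (rule conjI; intro impI)
      assume qn: "q < n"
      have zm: "t * n - z = (t - \<rho>) + t * (n - q - 1)" unfolding z_def by (rule minus_rep[OF \<rho>(2) qn])
      have inm: "inY t c (t * n - z) \<longleftrightarrow> n - q - 1 < c (t - \<rho>)" unfolding zm by (rule inY_rep[OF t0]) (use \<rho> in auto)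
      show "(\<not> n - q - 1 < c (t - \<rho>)) \<longleftrightarrow> (n + q < c \<rho> \<and> \<not> (\<rho> = \<rho>a \<and> n + q = qa))"
        using C[of z] zle qn inm inp eqa z1 by auto
    next
      assume "n \<le> q" "n + q < c \<rho>"
      then show "\<rho> = \<rho>a \<and> n + q = qa" using C[of z] zle inp eqa z1 by auto
    qed
  qed
  have Pnone: "c \<rho> + c (t - \<rho>) = 2 * n" if "0 < \<rho>" "\<rho> < t" "\<rho> \<noteq> \<rho>a" "t - \<rho> \<noteq> \<rho>a" for \<rho>
  proof (rule pair_noE)
    fix q
    show "q < n \<Longrightarrow> (\<not> n - q - 1 < c (t - \<rho>)) \<longleftrightarrow> n + q < c \<rho>" using R[of \<rho> q] that by auto
    show "n \<le> q \<Longrightarrow> \<not> n + q < c \<rho>" using R[of \<rho> q] that by auto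
    show "q < n \<Longrightarrow> (\<not> n - q - 1 < c \<rho>) \<longleftrightarrow> n + q < c (t - \<rho>)" using R[of "t - \<rho>" q] that by auto
    show "n \<le> q \<Longrightarrow> \<not> n + q < c (t - \<rho>)" using R[of "t - \<rho>" q] that by auto
  qed
  have Pa: "c \<rho>a + c (t - \<rho>a) = 2 * n + 1" if "t - \<rho>a \<noteq> \<rho>a"
  proof (rule pair_E[where e = "qa - n"])
    fix q
    show "q < n \<Longrightarrow> (\<not> n - q - 1 < c (t - \<rho>a)) \<longleftrightarrow> (n + q < c \<rho>a \<and> q \<noteq> qa - n)"
      using R[of \<rho>a q] \<rho>a0 \<rho>at qan by auto
    show "n \<le> q \<Longrightarrow> n + q < c \<rho>a \<Longrightarrow> q = qa - n" using R[of \<rho>a q] \<rho>a0 \<rho>at qan by auto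
    show "q < n \<Longrightarrow> (\<not> n - q - 1 < c \<rho>a) \<longleftrightarrow> n + q < c (t - \<rho>a)"
      using R[of "t - \<rho>a" q] \<rho>a0 \<rho>at that by auto
    show "n \<le> q \<Longrightarrow> \<not> n + q < c (t - \<rho>a)" using R[of "t - \<rho>a" q] \<rho>a0 \<rho>at that by auto
  next
    show "n + (qa - n) < c \<rho>a" using qac qan by auto
  qed
  have Pself: "c \<rho>a = n + 1" if "t - \<rho>a = \<rho>a"
  proof (rule self_E[where e = "qa - n"])
    fix q
    show "q < n \<Longrightarrow> (\<not> n - q - 1 < c \<rho>a) \<longleftrightarrow> (n + q < c \<rho>a \<and> q \<noteq> qa - n)"
      using R[of \<rho>a q] \<rho>a0 \<rho>at qan that by auto
    show "n \<le> q \<Longrightarrow> n + q < c \<rho>a \<Longrightarrow> q = qa - n" using R[of \<rho>a q] \<rho>a0 \<rho>at qan by auto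
  next
    show "n + (qa - n) < c \<rho>a" using qac qan by auto
  qed
  define i0 where "i0 = min \<rho>a (t - \<rho>a)"
  have i0r: "i0 \<in> {1..t div 2}" unfolding i0_def using \<rho>a0 \<rho>at by auto
  show ?thesis
    unfolding condA_def
  proof (intro bexI[OF _ i0r] conjI ballI)
    show "c 0 = n" by (rule c0)
  next
    fix i assume i: "i \<in> {1..t div 2}"
    show "c i + c (t - i) = (if i = i0 then 2 * n + 1 + (if 2 * i0 = t then 1 else 0) else 2 * n)"
    proof (cases "i = i0")
      case True
      show ?thesis
      proof (cases "2 * i0 = t")
        case True
        then have "t - \<rho>a = \<rho>a" "i = \<rho>a" using \<open>i = i0\<close> unfolding i0_def using \<rho>at by auto
        then show ?thesis using Pself \<open>i = i0\<close> True by auto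
      next
        case False
        then have ne: "t - \<rho>a \<noteq> \<rho>a" unfolding i0_def by auto
        have "i = \<rho>a \<or> i = t - \<rho>a" using \<open>i = i0\<close> unfolding i0_def by auto
        moreover have "t - (t - \<rho>a) = \<rho>a" using \<rho>at by auto
        ultimately have "c i + c (t - i) = 2 * n + 1" using Pa[OF ne] by auto
        then show ?thesis using \<open>i = i0\<close> False by auto
      qed
    next
      case False
      have "i \<noteq> \<rho>a" "t - i \<noteq> \<rho>a" using False i \<rho>at unfolding i0_def by auto
      then show ?thesis using Pnone[of i] i False t2 by auto
    qed
  qed
qed

lemma E_fwd:
  assumes t2: "2 \<le> t" and n1: "1 \<le> n" and ca: "condA t n c"
  shows "\<exists>xa. condB t n c xa"
proof -
  have t0: "0 < t" using t2 by auto
  obtain i0 where i0: "i0 \<in> {1..t div 2}" and c0: "c 0 = n"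
    and H: "\<And>i. i \<in> {1..t div 2} \<Longrightarrow> c i + c (t - i) = (if i = i0 then 2 * n + 1 + (if 2 * i0 = t then 1 else 0) else 2 * n)"
    using ca unfolding condA_def by blast
  have ps: "c \<rho> + c (t - \<rho>) = (if \<rho> = i0 \<or> \<rho> = t - i0 then 2 * n + 1 + (if 2 * i0 = t then 1 else 0) else 2 * n)"
    if \<rho>: "0 < \<rho>" "\<rho> < t" for \<rho>
  proof -
    define i where "i = min \<rho> (t - \<rho>)"
    have ir: "i \<in> {1..t div 2}" unfolding i_def using \<rho> by auto
    have ii0: "i = i0 \<longleftrightarrow> (\<rho> = i0 \<or> \<rho> = t - i0)" unfolding i_def using i0 \<rho> by auto
    have "c i + c (t - i) = c \<rho> + c (t - \<rho>)" unfolding i_def using \<rho> by (cases "\<rho> \<le> t - \<rho>") auto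
    then show ?thesis using H[OF ir] ii0 by simp
  qed
  define self where "self = (2 * i0 = t)"
  define \<rho>a where "\<rho>a = (if self then i0 else if n + 1 \<le> c i0 then i0 else t - i0)"
  have i0t: "0 < i0" "i0 < t" using i0 t2 by auto
  have \<rho>a: "0 < \<rho>a" "\<rho>a < t" "\<rho>a = i0 \<or> \<rho>a = t - i0" unfolding \<rho>a_def using i0t by auto
  have tt: "t - (t - i0) = i0" using i0t by auto
  have ps0: "c i0 + c (t - i0) = 2 * n + 1 + (if self then 1 else 0)" using ps[OF i0t] unfolding self_def by simp
  have selfc: "c \<rho>a = n + 1" "t - \<rho>a = \<rho>a" if self
    using ps0 that unfolding \<rho>a_def self_def by auto
  have nselfc: "c \<rho>a + c (t - \<rho>a) = 2 * n + 1" "t - \<rho>a \<noteq> \<rho>a" "n + 1 \<le> c \<rho>a" if "\<not> self"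
    using ps0 that tt unfolding \<rho>a_def self_def by (auto split: if_splits)
  have ca1: "n + 1 \<le> c \<rho>a" using selfc nselfc by (cases self) auto
  define qa where "qa = c \<rho>a - 1"
  define xa where "xa = \<rho>a + t * qa"
  have qan: "n \<le> qa" unfolding qa_def using ca1 by auto
  have xaY: "inY t c xa" unfolding xa_def qa_def using inY_rep[OF t0 \<rho>a(2)] ca1 by auto
  have xan: "t * n < xa"
  proof -
    have "t * n \<le> t * qa" using qan by (intro mult_le_mono2)
    then show ?thesis unfolding xa_def using \<rho>a(1) by linarith
  qed
  have pw: "(\<rho> + t * q \<le> t * n \<and> \<not> inY t c (t * n - (\<rho> + t * q))) \<longleftrightarrow>
      (\<rho> + t * q = 0 \<or> (1 \<le> \<rho> + t * q \<and> inY t c (t * n + (\<rho> + t * q)) \<and> t * n + (\<rho> + t * q) \<noteq> xa))"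
    if \<rho>t: "\<rho> < t" for \<rho> q
  proof (cases "\<rho> = 0")
    case True
    have inP: "inY t c (t * n + (\<rho> + t * q)) \<longleftrightarrow> n + q < c 0"
      unfolding plus_rep True using inY_rep[OF t0 t0, of c "n + q"] by simp
    show ?thesis
    proof (cases "q = 0")
      case True
      have "inY t c (0 + t * n) \<longleftrightarrow> n < c 0" by (rule inY_rep[OF t0 t0])
      then show ?thesis using \<open>\<rho> = 0\<close> True c0 by simp
    next
      case False
      have "\<not> (\<rho> + t * q \<le> t * n \<and> \<not> inY t c (t * n - (\<rho> + t * q)))"
      proof
        assume h: "\<rho> + t * q \<le> t * n \<and> \<not> inY t c (t * n - (\<rho> + t * q))"
        then have "t * q \<le> t * n" using True by simp
        then have qn: "q \<le> n" using t0 by simp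
        have "t * n - (\<rho> + t * q) = 0 + t * (n - q)" using True by (simp add: diff_mult_distrib2)
        then have "inY t c (t * n - (\<rho> + t * q)) \<longleftrightarrow> n - q < c 0" using inY_rep[OF t0 t0] by simp
        then show False using h c0 False qn n1 by auto
      qed
      then show ?thesis using inP c0 True False t0 by auto
    qed
  next
    case False
    then have \<rho>0: "0 < \<rho>" by auto
    have zle: "\<rho> + t * q \<le> t * n \<longleftrightarrow> q < n" by (rule le_rep[OF \<rho>0 \<rho>t])
    have inp: "inY t c (t * n + (\<rho> + t * q)) \<longleftrightarrow> n + q < c \<rho>" unfolding plus_rep by (rule inY_rep[OF t0 \<rho>t])
    have eqa: "t * n + (\<rho> + t * q) = xa \<longleftrightarrow> (\<rho> = \<rho>a \<and> n + q = qa)" unfolding plus_rep xa_def by (rule eq_rep[OF t0 \<rho>t \<rho>a(2)])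
    have pr: "c \<rho> + c (t - \<rho>) = (if \<rho> = i0 \<or> \<rho> = t - i0 then 2 * n + 1 + (if self then 1 else 0) else 2 * n)"
      using ps[OF \<rho>0 \<rho>t] unfolding self_def by simp
    have tr: "t - (t - \<rho>) = \<rho>" using \<rho>t by auto
    have core: "(q < n \<longrightarrow> ((\<not> n - q - 1 < c (t - \<rho>)) \<longleftrightarrow> (n + q < c \<rho> \<and> \<not> (\<rho> = \<rho>a \<and> n + q = qa)))) \<and>
                (n \<le> q \<longrightarrow> \<not> (n + q < c \<rho> \<and> \<not> (\<rho> = \<rho>a \<and> n + q = qa)))"
    proof (cases "\<rho> = i0 \<or> \<rho> = t - i0")
      case False
      then have "\<rho> \<noteq> \<rho>a" "c \<rho> + c (t - \<rho>) = 2 * n" using \<rho>a(3) pr by auto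
      then show ?thesis by auto
    next
      case True
      show ?thesis
      proof (cases self)
        case True
        then have "\<rho> = \<rho>a" "t - \<rho> = \<rho>" "c \<rho> = n + 1" "qa = n"
          using \<open>\<rho> = i0 \<or> \<rho> = t - i0\<close> selfc unfolding \<rho>a_def self_def qa_def by auto
        then show ?thesis by auto
      next
        case False
        show ?thesis
        proof (cases "\<rho> = \<rho>a")
          case True
          then have "c \<rho> + c (t - \<rho>) = 2 * n + 1" "qa = c \<rho> - 1" "n + 1 \<le> c \<rho>"
            using nselfc[OF False] unfolding qa_def by auto
          then show ?thesis using True by auto
        next
          case False2: False
          then have "t - \<rho> = \<rho>a" using \<open>\<rho> = i0 \<or> \<rho> = t - i0\<close> \<rho>a(3) tt \<rho>t by auto
          then have "c \<rho> \<le> n" using nselfc[OF False] tr by auto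
          then show ?thesis using False2 \<open>t - \<rho> = \<rho>a\<close> ca1 by auto
        qed
      qed
    qed
    show ?thesis
    proof (cases "q < n")
      case True
      have zm: "t * n - (\<rho> + t * q) = (t - \<rho>) + t * (n - q - 1)" by (rule minus_rep[OF \<rho>t True])
      have inm: "inY t c (t * n - (\<rho> + t * q)) \<longleftrightarrow> n - q - 1 < c (t - \<rho>)" unfolding zm by (rule inY_rep[OF t0]) (use \<rho>0 \<rho>t in auto)
      show ?thesis using core True zle inm inp eqa \<rho>0 by auto
    next
      case False
      then show ?thesis using core zle inp eqa \<rho>0 by auto
    qed
  qed
  have "condB t n c xa"
    unfolding condB_def
  proof (intro conjI allI)
    show "inY t c xa" by (rule xaY)
    show "t * n < xa" by (rule xan)
  next
    fix z
    have ze: "z = z mod t + t * (z div t)" by simp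
    have "z mod t < t" using t0 by simp
    then show "(z \<le> t * n \<and> \<not> inY t c (t * n - z)) \<longleftrightarrow> (z = 0 \<or> (1 \<le> z \<and> inY t c (t * n + z) \<and> t * n + z \<noteq> xa))"
      using pw[of "z mod t" "z div t"] ze by metis
  qed
  then show ?thesis by blast
qed

lemma set_cond:
  fixes Y :: "nat set" and N :: nat
  defines "A \<equiv> (\<lambda>x. x - (N + 1)) ` {x \<in> Y. N + 1 \<le> x}"
    and "G \<equiv> (\<lambda>y. N + 1 - 1 - y) ` {y. y < N + 1 \<and> y \<notin> Y}"
  shows "(\<exists>a0\<in>A. G = insert 0 ((\<lambda>a. a + 1) ` (A - {a0}))) \<longleftrightarrow>
    (\<exists>xa. xa \<in> Y \<and> N < xa \<and> (\<forall>z. (z \<le> N \<and> N - z \<notin> Y) \<longleftrightarrow> (z = 0 \<or> (1 \<le> z \<and> N + z \<in> Y \<and> N + z \<noteq> xa))))"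
proof -
  have memG: "z \<in> G \<longleftrightarrow> z \<le> N \<and> N - z \<notin> Y" for z
  proof
    assume "z \<in> G"
    then obtain y where "y < N + 1" "y \<notin> Y" "z = N - y" unfolding G_def by auto
    then have "y \<le> N" "N - z = y" by auto
    then show "z \<le> N \<and> N - z \<notin> Y" using \<open>y \<notin> Y\<close> \<open>z = N - y\<close> by auto
  next
    assume h: "z \<le> N \<and> N - z \<notin> Y"
    show "z \<in> G" unfolding G_def by (rule image_eqI[where x = "N - z"]) (use h in auto)
  qed
  have memA: "a \<in> A \<longleftrightarrow> a + (N + 1) \<in> Y" for a
  proof
    assume "a \<in> A"
    then obtain x where "x \<in> Y" "N + 1 \<le> x" "a = x - (N + 1)" unfolding A_def by auto
    then show "a + (N + 1) \<in> Y" by simp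
  next
    assume "a + (N + 1) \<in> Y"
    then show "a \<in> A" unfolding A_def by (intro image_eqI[of _ _ "a + (N + 1)"]) auto
  qed
  have memR: "z \<in> insert 0 ((\<lambda>a. a + 1) ` (A - {a0})) \<longleftrightarrow> (z = 0 \<or> (1 \<le> z \<and> N + z \<in> Y \<and> N + z \<noteq> a0 + (N + 1)))" for z a0
  proof
    assume "z \<in> insert 0 ((\<lambda>a. a + 1) ` (A - {a0}))"
    then consider "z = 0" | a where "a \<in> A" "a \<noteq> a0" "z = a + 1" by blast
    then show "z = 0 \<or> (1 \<le> z \<and> N + z \<in> Y \<and> N + z \<noteq> a0 + (N + 1))"
    proof cases
      case 2
      have "a + (N + 1) \<in> Y" using memA 2(1) by blast
      moreover have "N + z = a + (N + 1)" using 2(3) by simp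
      ultimately have "N + z \<in> Y" by metis
      moreover have "N + z \<noteq> a0 + (N + 1)" using 2 by simp
      ultimately show ?thesis using 2 by simp
    qed simp
  next
    assume h: "z = 0 \<or> (1 \<le> z \<and> N + z \<in> Y \<and> N + z \<noteq> a0 + (N + 1))"
    show "z \<in> insert 0 ((\<lambda>a. a + 1) ` (A - {a0}))"
    proof (cases "z = 0")
      case False
      have eq: "z - 1 + (N + 1) = N + z" using False by auto
      have hz: "N + z \<in> Y" "N + z \<noteq> a0 + (N + 1)" using h False by auto
      have "z - 1 + (N + 1) \<in> Y" using hz(1) by (simp only: eq)
      then have "z - 1 \<in> A" using memA by blast
      moreover have "z - 1 \<noteq> a0" using hz(2) False by arith
      ultimately have "z - 1 \<in> A - {a0}" by blast
      then show ?thesis using False by (intro insertI2 image_eqI[of _ _ "z - 1"]) auto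
    qed simp
  qed
  show ?thesis
  proof
    assume "\<exists>a0\<in>A. G = insert 0 ((\<lambda>a. a + 1) ` (A - {a0}))"
    then obtain a0 where a0: "a0 \<in> A" "G = insert 0 ((\<lambda>a. a + 1) ` (A - {a0}))" by blast
    have "a0 + (N + 1) \<in> Y" using a0(1) memA by auto
    moreover have "\<forall>z. (z \<le> N \<and> N - z \<notin> Y) \<longleftrightarrow> (z = 0 \<or> (1 \<le> z \<and> N + z \<in> Y \<and> N + z \<noteq> a0 + (N + 1)))"
    proof
      fix z
      have "z \<in> G \<longleftrightarrow> z \<in> insert 0 ((\<lambda>a. a + 1) ` (A - {a0}))" using a0(2) by simp
      then show "(z \<le> N \<and> N - z \<notin> Y) \<longleftrightarrow> (z = 0 \<or> (1 \<le> z \<and> N + z \<in> Y \<and> N + z \<noteq> a0 + (N + 1)))"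
        unfolding memG memR .
    qed
    ultimately show "\<exists>xa. xa \<in> Y \<and> N < xa \<and> (\<forall>z. (z \<le> N \<and> N - z \<notin> Y) \<longleftrightarrow> (z = 0 \<or> (1 \<le> z \<and> N + z \<in> Y \<and> N + z \<noteq> xa)))"
      by (intro exI[of _ "a0 + (N + 1)"]) auto
  next
    assume "\<exists>xa. xa \<in> Y \<and> N < xa \<and> (\<forall>z. (z \<le> N \<and> N - z \<notin> Y) \<longleftrightarrow> (z = 0 \<or> (1 \<le> z \<and> N + z \<in> Y \<and> N + z \<noteq> xa)))"
    then obtain xa where xa: "xa \<in> Y" "N < xa"
      "\<And>z. (z \<le> N \<and> N - z \<notin> Y) \<longleftrightarrow> (z = 0 \<or> (1 \<le> z \<and> N + z \<in> Y \<and> N + z \<noteq> xa))" by blast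
    define a0 where "a0 = xa - (N + 1)"
    have xe: "xa = a0 + (N + 1)" unfolding a0_def using xa(2) by auto
    have "a0 \<in> A" using memA xa(1) xe by auto
    moreover have "G = insert 0 ((\<lambda>a. a + 1) ` (A - {a0}))"
    proof (rule set_eqI)
      fix z show "z \<in> G \<longleftrightarrow> z \<in> insert 0 ((\<lambda>a. a + 1) ` (A - {a0}))"
        unfolding memG memR xa(3)[of z] xe ..
    qed
    ultimately show "\<exists>a0\<in>A. G = insert 0 ((\<lambda>a. a + 1) ` (A - {a0}))" by blast
  qed
qed

theorem corollary3p7:
  fixes t n :: nat and lam :: "nat list"
  assumes "t \<ge> 2" and "n \<ge> 1"
    and "is_partition lam" and "length lam \<le> t * n + 1"
  shows "(\<exists>i0\<in>{1..t div 2}.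
            ncount t lam (t * n + 1) 0 = n \<and>
            (\<forall>i\<in>{1..t div 2}.
               ncount t lam (t * n + 1) i + ncount t lam (t * n + 1) (t - i) =
                 (if i = i0 then 2 * n + 1 + (if 2 * i0 = t then 1 else 0) else 2 * n)))
         \<longleftrightarrow> (\<exists>k. 1 \<le> k \<and> k \<le> rk (tcore t lam) \<and> asymmetric 1 0 k (tcore t lam))"
proof -
  let ?l = "t * n + 1"
  define c where "c = ncount t lam ?l"
  have t1: "1 \<le> t" using assms(1) by auto
  have ceq: "c = cnt t (bset ?l lam)" unfolding c_def using ncount_cnt[OF assms(3)] by auto
  define mu where "mu = tcore t lam"
  have mu: "is_partition mu" "length mu \<le> ?l" "bset ?l mu = coreset t (bset ?l lam)"
    using tcore_bset[OF assms(3,4) t1] unfolding mu_def by auto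
  define Y where "Y = bset ?l mu"
  have Yin: "x \<in> Y \<longleftrightarrow> inY t c x" for x
    unfolding Y_def mu(3) coreset_def inY_def ceq by simp
  have lhs: "(\<exists>i0\<in>{1..t div 2}.
            ncount t lam (t * n + 1) 0 = n \<and>
            (\<forall>i\<in>{1..t div 2}.
               ncount t lam (t * n + 1) i + ncount t lam (t * n + 1) (t - i) =
                 (if i = i0 then 2 * n + 1 + (if 2 * i0 = t then 1 else 0) else 2 * n)))
        \<longleftrightarrow> condA t n c" unfolding condA_def c_def ..
  have "(\<exists>k. 1 \<le> k \<and> k \<le> rk mu \<and> asymmetric 1 0 k mu) \<longleftrightarrow>
    (\<exists>a0\<in>set (frob_arms mu). set (frob_legs mu) = insert 0 ((\<lambda>a. a + 1) ` (set (frob_arms mu) - {a0})))"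
    by (rule asym_iff[OF mu(1,2)])
  also have "\<dots> \<longleftrightarrow> (\<exists>a0\<in>(\<lambda>x. x - (t * n + 1)) ` {x \<in> Y. t * n + 1 \<le> x}.
      (\<lambda>y. t * n + 1 - 1 - y) ` {y. y < t * n + 1 \<and> y \<notin> Y} =
        insert 0 ((\<lambda>a. a + 1) ` ((\<lambda>x. x - (t * n + 1)) ` {x \<in> Y. t * n + 1 \<le> x} - {a0})))"
    unfolding arms_props(2)[OF mu(1,2)] legs_props(2)[OF mu(1,2)] Y_def ..
  also have "\<dots> \<longleftrightarrow> (\<exists>xa. xa \<in> Y \<and> t * n < xa \<and> (\<forall>z. (z \<le> t * n \<and> t * n - z \<notin> Y) \<longleftrightarrow>
      (z = 0 \<or> (1 \<le> z \<and> t * n + z \<in> Y \<and> t * n + z \<noteq> xa))))"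
    by (rule set_cond)
  also have "\<dots> \<longleftrightarrow> (\<exists>xa. condB t n c xa)"
    unfolding condB_def Yin ..
  finally have rhs: "(\<exists>k. 1 \<le> k \<and> k \<le> rk mu \<and> asymmetric 1 0 k mu) \<longleftrightarrow> (\<exists>xa. condB t n c xa)" .
  have "condA t n c \<longleftrightarrow> (\<exists>xa. condB t n c xa)"
    using E_fwd[OF assms(1,2)] E_back[OF assms(1,2)] by blast
  then show ?thesis using lhs rhs unfolding mu_def by simp
qed

end
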